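(* Let $S(z)$ be a Rosenbrock system matrix and $\lambda\in\mathbb{C}$ with $S(\lambda)$ invertible. (i) If $\eta^{\mathbb{S}}(\lambda,B)<\infty$, then $\eta^{\mathbb{S}}(\lambda,B)=1/\sigma_{\max}\big([0_{n,r}\ I_n]\,S(\lambda)^{-1}[I_r\ 0_{r,n}]^T\big)$. (ii) If $\eta^{\mathbb{S}}(\lambda,C)<\infty$, then $\eta^{\mathbb{S}}(\lambda,C)=1/\sigma_{\max}\big([I_r\ 0_{r,n}]\,S(\lambda)^{-1}[0_{n,r}\ I_n]^T\big)$. (iii) If $\eta^{\mathbb{S}}(\lambda,P)<\infty$, let $J_1:=\operatorname{diag}\Big(\begin{bmatrix}0_{r,n}\\ I_n\end{bmatrix},\tilde J_1\Big)\in\mathbb{C}^{(d+1)(r+n),(d+1)n}$ and $J_2:=\begin{bmatrix}[0_{n,r}\ I_n]\\ \tilde J_2\end{bmatrix}\in\mathbb{C}^{(d+1)n,r+n}$. Then $\eta^{\mathbb{S}}(\lambda,P)=(\mu_{\mathcal{S}}(M))^{-1}$, where $M:=J_2S(\lambda)^{-1}[I_{r+n}\ \lambda I_{r+n}\ \cdots\ \lambda^dI_{r+n}]J_1$ and $\mathcal{S}=\{\operatorname{diag}(\Delta_1,\ldots,\Delta_{d+1}) : \Delta_i\in\mathbb{C}^{n,n}\}$.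
   Context: A Rosenbrock system matrix is $S(z)=\begin{bmatrix}A-zI_r & B\\ C & P(z)\end{bmatrix}$ with $A\in\mathbb{C}^{r,r}$, $B\in\mathbb{C}^{r,n}$, $C\in\mathbb{C}^{n,r}$, $P(z)=\sum_{k=0}^d z^kA_k$, $A_k\in\mathbb{C}^{n,n}$. $\|\cdot\|$ is the spectral norm, $\sigma_{\max}$ the largest singular value, $0_{m,n}$ the $m\times n$ zero matrix. Backward errors with perturbation of one block only (with $\inf\emptyset=\infty$): $\eta^{\mathbb{S}}(\lambda,B):=\inf\{\|\Delta_B\| : \Delta_B\in\mathbb{C}^{r,n},\ \det(S(\lambda)-\begin{bmatrix}0&\Delta_B\\0&0\end{bmatrix})=0\}$; $\eta^{\mathbb{S}}(\lambda,C):=\inf\{\|\Delta_C\| : \Delta_C\in\mathbb{C}^{n,r},\ \det(S(\lambda)-\begin{bmatrix}0&0\\ \Delta_C&0\end{bmatrix})=0\}$; $\eta^{\mathbb{S}}(\lambda,P):=\inf\{\max_j\|\Delta_{A_j}\| : \Delta_{A_j}\in\mathbb{C}^{n,n},\ \det(S(\lambda)-\begin{bmatrix}0&0\\0&\sum_{j=0}^d\lambda^j\Delta_{A_j}\end{bmatrix})=0\}$. $\tilde J_1\in\mathbb{C}^{(r+n)d,\,nd}$ is the block-diagonal matrix with $d$ diagonal blocks each equal to $\begin{bmatrix}0_{r,n}\\ I_n\end{bmatrix}$; $\tilde J_2\in\mathbb{C}^{nd,\,r+n}$ is the vertical stack of $d$ copies of $[0_{n,r}\ I_n]$. Structured $\mu$-value: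 for $M\in\mathbb{C}^{k,p}$ and $\mathcal{S}\subseteq\mathbb{C}^{p,k}$, $\mu_{\mathcal{S}}(M):=\big(\inf\{\|\Delta\| : \Delta\in\mathcal{S},\ \det(I_p-\Delta M)=0\}\big)^{-1}$, with $\mu_{\mathcal S}(M)=0$ if no such $\Delta$ exists. *)

theory Defs
  imports "Jordan_Normal_Form.Matrix" "Jordan_Normal_Form.Determinant"
    "Jordan_Normal_Form.Char_Poly" "Jordan_Normal_Form.Schur_Decomposition"
    "HOL-Library.Extended_Real"
begin

fun mpoly :: "(nat \<Rightarrow> complex mat) \<Rightarrow> nat \<Rightarrow> complex \<Rightarrow> complex mat" where
  "mpoly As 0 z = As 0"
| "mpoly As (Suc k) z = mpoly As k z + (z ^ Suc k) \<cdot>\<^sub>m As (Suc k)"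

definition rosen :: "nat \<Rightarrow> complex mat \<Rightarrow> complex mat \<Rightarrow> complex mat \<Rightarrow> (nat \<Rightarrow> complex mat)
    \<Rightarrow> nat \<Rightarrow> complex \<Rightarrow> complex mat" where
  "rosen r A B C As d z = four_block_mat (A - z \<cdot>\<^sub>m 1\<^sub>m r) B C (mpoly As d z)"

definition vnorm :: "complex vec \<Rightarrow> real" where
  "vnorm v = sqrt (\<Sum>i<dim_vec v. (cmod (v $ i))\<^sup>2)"

definition spec_norm :: "complex mat \<Rightarrow> real" where
  "spec_norm M = Sup ((\<lambda>v. vnorm (M *\<^sub>v v)) ` {v \<in> carrier_vec (dim_col M). vnorm v \<le> 1})"

definition sigma_max :: "complex mat \<Rightarrow> real" where
  "sigma_max M = sqrt (Max (insert 0 (Re ` {e. eigenvalue (mat_adjoint M * M) e})))"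

definition hcat :: "complex mat \<Rightarrow> complex mat \<Rightarrow> complex mat" where
  "hcat X Y = four_block_mat X Y (0\<^sub>m 0 (dim_col X)) (0\<^sub>m 0 (dim_col Y))"

text \<open>Backward errors (infimum in the extended reals, Inf {} = \<infinity>).\<close>
definition eta_B :: "nat \<Rightarrow> nat \<Rightarrow> complex mat \<Rightarrow> complex mat \<Rightarrow> complex mat \<Rightarrow> (nat \<Rightarrow> complex mat)
    \<Rightarrow> nat \<Rightarrow> complex \<Rightarrow> ereal" where
  "eta_B r n A B C As d l = Inf {ereal (spec_norm DB) | DB. DB \<in> carrier_mat r n \<and>
     det (rosen r A B C As d l - four_block_mat (0\<^sub>m r r) DB (0\<^sub>m n r) (0\<^sub>m n n)) = 0}"

definition eta_C :: "nat \<Rightarrow> nat \<Rightarrow> complex mat \<Rightarrow> complex mat \<Rightarrow> complex mat \<Rightarrow> (nat \<Rightarrow> complex mat)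
    \<Rightarrow> nat \<Rightarrow> complex \<Rightarrow> ereal" where
  "eta_C r n A B C As d l = Inf {ereal (spec_norm DC) | DC. DC \<in> carrier_mat n r \<and>
     det (rosen r A B C As d l - four_block_mat (0\<^sub>m r r) (0\<^sub>m r n) DC (0\<^sub>m n n)) = 0}"

definition eta_P :: "nat \<Rightarrow> nat \<Rightarrow> complex mat \<Rightarrow> complex mat \<Rightarrow> complex mat \<Rightarrow> (nat \<Rightarrow> complex mat)
    \<Rightarrow> nat \<Rightarrow> complex \<Rightarrow> ereal" where
  "eta_P r n A B C As d l = Inf {ereal (Max ((\<lambda>j. spec_norm (DA j)) ` {0..d})) | DA.
     (\<forall>j\<le>d. DA j \<in> carrier_mat n n) \<and>
     det (rosen r A B C As d l - four_block_mat (0\<^sub>m r r) (0\<^sub>m r n) (0\<^sub>m n r) (mpoly DA d l)) = 0}"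

definition mu_S :: "complex mat set \<Rightarrow> complex mat \<Rightarrow> ereal" where
  "mu_S SS M = (let T = {D \<in> SS. det (1\<^sub>m (dim_col M) - D * M) = 0} in
     if T = {} then 0 else inverse (Inf ((\<lambda>D. ereal (spec_norm D)) ` T)))"

definition blockdiag_set :: "nat \<Rightarrow> nat \<Rightarrow> complex mat set" where
  "blockdiag_set n d = {diag_block_mat Ds | Ds. length Ds = d + 1 \<and> (\<forall>D \<in> set Ds. D \<in> carrier_mat n n)}"

definition J1t :: "nat \<Rightarrow> nat \<Rightarrow> nat \<Rightarrow> complex mat" where
  "J1t r n d = diag_block_mat (replicate d (0\<^sub>m r n @\<^sub>r 1\<^sub>m n))"

definition J2t :: "nat \<Rightarrow> nat \<Rightarrow> nat \<Rightarrow> complex mat" where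
  "J2t r n d = foldr (@\<^sub>r) (replicate d (hcat (0\<^sub>m n r) (1\<^sub>m n))) (0\<^sub>m 0 (r + n))"

definition J1 :: "nat \<Rightarrow> nat \<Rightarrow> nat \<Rightarrow> complex mat" where
  "J1 r n d = diag_block_mat [0\<^sub>m r n @\<^sub>r 1\<^sub>m n, J1t r n d]"

definition J2 :: "nat \<Rightarrow> nat \<Rightarrow> nat \<Rightarrow> complex mat" where
  "J2 r n d = hcat (0\<^sub>m n r) (1\<^sub>m n) @\<^sub>r J2t r n d"

definition powrow :: "nat \<Rightarrow> nat \<Rightarrow> complex \<Rightarrow> complex mat" where
  "powrow m d l = foldr hcat (map (\<lambda>k. (l ^ k) \<cdot>\<^sub>m 1\<^sub>m m) [0..<d + 1]) (0\<^sub>m m 0)"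

end

theory Submission
  imports "HOL-Analysis.Analysis" Defs
begin

no_notation Finite_Cartesian_Product.vec_nth (infixl "$" 90)

lemma compact_K: "compact (PiE UNIV (\<lambda>i. if i < (p::nat) then cball (0::complex) 1 else {0})
     \<inter> {f. (\<Sum>i<p. (cmod (f i))\<^sup>2) \<le> 1})"
proof (rule compact_Int_closed)
  have "compactin (product_topology (\<lambda>i. euclidean) UNIV)
          (PiE UNIV (\<lambda>i. if i < (p::nat) then cball (0::complex) 1 else {0}))"
    by (subst compactin_PiE) auto
  then show "compact (PiE UNIV (\<lambda>i. if i < (p::nat) then cball (0::complex) 1 else {0}))"
    by (simp add: euclidean_product_topology)
  show "closed {f::nat \<Rightarrow> complex. (\<Sum>i<p. (cmod (f i))\<^sup>2) \<le> 1}"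
    by (intro closed_Collect_le continuous_intros continuous_on_compose2[OF _ continuous_on_product_coordinates]) auto
qed

lemma vnorm_le1_coord: assumes "vnorm w \<le> 1" "i < dim_vec w" shows "cmod (w $ i) \<le> 1"
proof -
  have "(cmod (w $ i))\<^sup>2 \<le> (\<Sum>i<dim_vec w. (cmod (w $ i))\<^sup>2)"
    by (rule member_le_sum) (use assms in auto)
  also have "\<dots> \<le> 1" using assms unfolding vnorm_def by (simp add: real_sqrt_le_1_iff)
  finally show ?thesis by (simp add: power_le_one_iff)
qed

lemma max_exists:
  assumes M: "M \<in> carrier_mat k p"
  shows "\<exists>v\<in>carrier_vec p. vnorm v \<le> 1 \<and>
     (\<forall>w\<in>carrier_vec p. vnorm w \<le> 1 \<longrightarrow> vnorm (M *\<^sub>v w) \<le> vnorm (M *\<^sub>v v))"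
proof -
  define K where "K = PiE UNIV (\<lambda>i. if i < (p::nat) then cball (0::complex) 1 else {0})
     \<inter> {f. (\<Sum>i<p. (cmod (f i))\<^sup>2) \<le> 1}"
  define F where "F f = sqrt (\<Sum>i<k. (cmod (\<Sum>j\<in>{0..<p}. M $$ (i,j) * f j))\<^sup>2)" for f :: "nat \<Rightarrow> complex"
  have Fv: "F f = vnorm (M *\<^sub>v vec p f)" for f
    unfolding F_def vnorm_def using M
    by (auto simp: scalar_prod_def row_def intro!: arg_cong[where f=sqrt] sum.cong)
  have c1: "compact K" unfolding K_def by (rule compact_K)
  have "(\<lambda>_. 0) \<in> K" unfolding K_def by auto
  then have c2: "K \<noteq> {}" by auto
  have c3: "continuous_on K F"
  proof -
    have cc: "\<And>j. continuous_on K (\<lambda>x. x j)"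
      by (rule continuous_on_subset[OF continuous_on_product_coordinates]) simp
    show ?thesis unfolding F_def by (intro continuous_intros cc)
  qed
  obtain x where x: "x \<in> K" and xm: "\<And>y. y \<in> K \<Longrightarrow> F y \<le> F x"
    using continuous_attains_sup[OF c1 c2 c3] by blast
  show ?thesis
  proof (intro bexI[of _ "vec p x"] conjI ballI impI)
    show "vnorm (vec p x) \<le> 1" using x unfolding K_def vnorm_def by (simp add: real_sqrt_le_1_iff)
    fix w :: "complex vec" assume w: "w \<in> carrier_vec p" "vnorm w \<le> 1"
    define y where "y i = (if i < p then w $ i else 0)" for i
    have wy: "vec p y = w" using w by (auto simp: y_def)
    have "y \<in> K" unfolding K_def
    proof
      show "y \<in> PiE UNIV (\<lambda>i. if i < (p::nat) then cball (0::complex) 1 else {0})"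
        using vnorm_le1_coord[OF w(2)] w(1) by (auto simp: y_def)
      show "y \<in> {f. (\<Sum>i<p. (cmod (f i))\<^sup>2) \<le> 1}" using w unfolding vnorm_def
        by (simp add: y_def real_sqrt_le_1_iff)
    qed
    from xm[OF this] show "vnorm (M *\<^sub>v w) \<le> vnorm (M *\<^sub>v vec p x)" by (simp add: Fv wy)
  qed auto
qed

lemma vnorm_nonneg: "vnorm v \<ge> 0" unfolding vnorm_def by (simp add: sum_nonneg)

lemma vnorm_sq: "(vnorm v)\<^sup>2 = (\<Sum>i<dim_vec v. (cmod (v $ i))\<^sup>2)"
  unfolding vnorm_def by (simp add: sum_nonneg)

lemma vnorm_smult: "vnorm (c \<cdot>\<^sub>v v) = cmod c * vnorm v"
proof -
  have "(\<Sum>i<dim_vec v. (cmod (c * v $ i))\<^sup>2) = (cmod c)\<^sup>2 * (\<Sum>i<dim_vec v. (cmod (v $ i))\<^sup>2)"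
    by (simp add: sum_distrib_left norm_mult power_mult_distrib)
  then show ?thesis unfolding vnorm_def by (simp add: real_sqrt_mult)
qed

lemma vnorm_zero_iff: assumes "v \<in> carrier_vec p" shows "vnorm v = 0 \<longleftrightarrow> v = 0\<^sub>v p"
proof
  assume "vnorm v = 0"
  then have "(\<Sum>i<dim_vec v. (cmod (v $ i))\<^sup>2) = 0" unfolding vnorm_def by simp
  then have "\<forall>i\<in>{..<dim_vec v}. (cmod (v $ i))\<^sup>2 = 0" by (subst sum_nonneg_eq_0_iff[symmetric]) auto
  then show "v = 0\<^sub>v p" using assms by (intro eq_vecI) auto
qed (use assms in \<open>auto simp: vnorm_def\<close>)

lemma mv_index: assumes "M \<in> carrier_mat k p" "v \<in> carrier_vec p" "i < k"
  shows "(M *\<^sub>v v) $ i = (\<Sum>j<p. M $$ (i,j) * v $ j)"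
  using assms by (auto simp: scalar_prod_def row_def lessThan_atLeast0 intro!: sum.cong)

lemma spec_norm_props:
  assumes M: "M \<in> carrier_mat k p"
  shows "\<exists>v\<in>carrier_vec p. vnorm v \<le> 1 \<and> vnorm (M *\<^sub>v v) = spec_norm M"
    and "\<And>w. w \<in> carrier_vec p \<Longrightarrow> vnorm (M *\<^sub>v w) \<le> spec_norm M * vnorm w"
    and "spec_norm M \<ge> 0"
proof -
  obtain v where v: "v \<in> carrier_vec p" "vnorm v \<le> 1"
    and vm: "\<And>w. w\<in>carrier_vec p \<Longrightarrow> vnorm w \<le> 1 \<Longrightarrow> vnorm (M *\<^sub>v w) \<le> vnorm (M *\<^sub>v v)"
    using max_exists[OF M] by blast
  have sp: "spec_norm M = vnorm (M *\<^sub>v v)" unfolding spec_norm_def using M v vm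
    by (intro cSup_eq_maximum) auto
  then show "\<exists>v\<in>carrier_vec p. vnorm v \<le> 1 \<and> vnorm (M *\<^sub>v v) = spec_norm M" using v by auto
  show "spec_norm M \<ge> 0" using sp vnorm_nonneg by simp
  fix w :: "complex vec" assume w: "w \<in> carrier_vec p"
  show "vnorm (M *\<^sub>v w) \<le> spec_norm M * vnorm w"
  proof (cases "vnorm w = 0")
    case True
    then have "w = 0\<^sub>v p" using vnorm_zero_iff[OF w] by simp
    then have "M *\<^sub>v w = 0\<^sub>v k" using M by auto
    then show ?thesis using True by (simp add: vnorm_def)
  next
    case False
    then have pos: "vnorm w > 0" using vnorm_nonneg[of w] by simp
    define w' where "w' = (complex_of_real (1 / vnorm w)) \<cdot>\<^sub>v w"
    have w': "w' \<in> carrier_vec p" "vnorm w' \<le> 1" using w pos by (auto simp: w'_def vnorm_smult norm_divide)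
    have "M *\<^sub>v w' = (complex_of_real (1 / vnorm w)) \<cdot>\<^sub>v (M *\<^sub>v w)"
      unfolding w'_def by (rule mult_mat_vec[OF M w])
    then have "vnorm (M *\<^sub>v w') = vnorm (M *\<^sub>v w) / vnorm w" using pos by (simp add: vnorm_smult norm_divide)
    with vm[OF w'] sp have "vnorm (M *\<^sub>v w) / vnorm w \<le> spec_norm M" by simp
    then show ?thesis using pos by (simp add: divide_le_eq mult.commute)
  qed
qed

lemma spec_norm_le:
  assumes M: "M \<in> carrier_mat k p" and c: "c \<ge> 0"
    and h: "\<And>w. w \<in> carrier_vec p \<Longrightarrow> vnorm (M *\<^sub>v w) \<le> c * vnorm w"
  shows "spec_norm M \<le> c"
proof -
  obtain v where v: "v\<in>carrier_vec p" "vnorm v \<le> 1" "vnorm (M *\<^sub>v v) = spec_norm M"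
    using spec_norm_props(1)[OF M] by blast
  have "spec_norm M \<le> c * vnorm v" using h[OF v(1)] v(3) by simp
  also have "\<dots> \<le> c" using c v(2) by (simp add: mult_left_le)
  finally show ?thesis .
qed

definition cip :: "complex vec \<Rightarrow> complex vec \<Rightarrow> complex" where
  "cip x y = (\<Sum>i<dim_vec x. cnj (x $ i) * y $ i)"

lemma cip_self: "cip x x = complex_of_real ((vnorm x)\<^sup>2)"
  unfolding cip_def vnorm_sq of_real_sum
  by (intro sum.cong refl) (metis complex_norm_square mult.commute)

lemma cip_add2: "dim_vec y = dim_vec x \<Longrightarrow> dim_vec z = dim_vec x \<Longrightarrow> cip x (y + z) = cip x y + cip x z"
  unfolding cip_def by (simp add: distrib_left sum.distrib)

lemma cip_smult2: "dim_vec y = dim_vec x \<Longrightarrow> cip x (c \<cdot>\<^sub>v y) = c * cip x y"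
  unfolding cip_def by (simp add: sum_distrib_left mult.assoc mult.left_commute)

lemma cmod_expand: "(cmod (a + complex_of_real t * b))\<^sup>2 = (cmod a)\<^sup>2 + 2 * t * Re (cnj b * a) + t\<^sup>2 * (cmod b)\<^sup>2"
  unfolding cmod_power2 by (simp add: power2_eq_square algebra_simps)

lemma vn_expand: assumes "dim_vec y = dim_vec x"
  shows "(vnorm (x + complex_of_real t \<cdot>\<^sub>v y))\<^sup>2 = (vnorm x)\<^sup>2 + 2 * t * Re (cip y x) + t\<^sup>2 * (vnorm y)\<^sup>2"
proof -
  have "(vnorm (x + complex_of_real t \<cdot>\<^sub>v y))\<^sup>2 = (\<Sum>i<dim_vec x. (cmod (x $ i))\<^sup>2 + 2 * t * Re (cnj (y $ i) * x $ i) + t\<^sup>2 * (cmod (y $ i))\<^sup>2)"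
    unfolding vnorm_sq using assms
  proof (intro sum.cong)
    fix i assume i: "i \<in> {..<dim_vec x}"
    then have "(x + complex_of_real t \<cdot>\<^sub>v y) $ i = x $ i + complex_of_real t * y $ i" using assms by simp
    then show "(cmod ((x + complex_of_real t \<cdot>\<^sub>v y) $ i))\<^sup>2 = (cmod (x $ i))\<^sup>2 + 2 * t * Re (cnj (y $ i) * x $ i) + t\<^sup>2 * (cmod (y $ i))\<^sup>2"
      by (simp add: cmod_expand)
  qed (use assms in auto)
  also have "\<dots> = (vnorm x)\<^sup>2 + 2 * t * Re (cip y x) + t\<^sup>2 * (vnorm y)\<^sup>2"
    unfolding vnorm_sq cip_def sum.distrib Re_sum sum_distrib_left[symmetric] using assms by simp
  finally show ?thesis .
qed

lemma adj_carrier: "M \<in> carrier_mat k p \<Longrightarrow> mat_adjoint M \<in> carrier_mat p k"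
  unfolding mat_adjoint_def by (auto simp: mat_of_rows_def)

lemma adj_index: "M \<in> carrier_mat k p \<Longrightarrow> i < p \<Longrightarrow> j < k \<Longrightarrow> mat_adjoint M $$ (i,j) = cnj (M $$ (j,i))"
  unfolding mat_adjoint_def by (auto simp: mat_of_rows_index)

lemma adj_cip:
  assumes M: "M \<in> carrier_mat k p" and v: "v \<in> carrier_vec p" and w: "w \<in> carrier_vec p"
  shows "cip (M *\<^sub>v w) (M *\<^sub>v v) = cip w ((mat_adjoint M * M) *\<^sub>v v)"
proof -
  have A: "mat_adjoint M \<in> carrier_mat p k" by (rule adj_carrier[OF M])
  have Mv: "M *\<^sub>v v \<in> carrier_vec k" using M v by simp
  have "(mat_adjoint M * M) *\<^sub>v v = mat_adjoint M *\<^sub>v (M *\<^sub>v v)" using A M v by simp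
  moreover have "(mat_adjoint M *\<^sub>v (M *\<^sub>v v)) $ j = (\<Sum>i<k. cnj (M $$ (i,j)) * (M *\<^sub>v v) $ i)" if "j < p" for j
    using that by (simp add: mv_index[OF A Mv] adj_index[OF M])
  ultimately have "cip w ((mat_adjoint M * M) *\<^sub>v v) = (\<Sum>j<p. cnj (w $ j) * (\<Sum>i<k. cnj (M $$ (i,j)) * (M *\<^sub>v v) $ i))"
    unfolding cip_def using w by (intro sum.cong) auto
  also have "\<dots> = (\<Sum>i<k. (\<Sum>j<p. cnj (M $$ (i,j)) * cnj (w $ j)) * (M *\<^sub>v v) $ i)"
    by (simp add: sum_distrib_left sum_distrib_right sum.swap[of _ "{..<k}"] mult_ac)
  also have "\<dots> = (\<Sum>i<k. cnj ((M *\<^sub>v w) $ i) * (M *\<^sub>v v) $ i)"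
    by (intro sum.cong refl) (simp add: mv_index[OF M w] cnj_sum sum_distrib_right mult_ac del: index_mult_mat_vec)
  also have "\<dots> = cip (M *\<^sub>v w) (M *\<^sub>v v)"
    unfolding cip_def using M w by simp
  finally show ?thesis by simp
qed

lemma quad_zero: fixes a b :: real assumes "\<And>t. 2 * t * a + t\<^sup>2 * b \<le> 0" shows "a = 0"
proof -
  define t where "t = a / (\<bar>b\<bar> + 1)"
  have pos: "\<bar>b\<bar> + 1 > 0" by simp
  have "2 * t * a + t\<^sup>2 * b \<le> 0" by (rule assms)
  then have nn: "(2 * t * a + t\<^sup>2 * b) * (\<bar>b\<bar> + 1)\<^sup>2 \<le> 0" by (simp add: mult_nonpos_nonneg)
  have tc: "t * (\<bar>b\<bar> + 1) = a" unfolding t_def using pos by simp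
  have "(2 * t * a + t\<^sup>2 * b) * (\<bar>b\<bar> + 1)\<^sup>2 = 2 * a * (t * (\<bar>b\<bar> + 1)) * (\<bar>b\<bar> + 1) + (t * (\<bar>b\<bar> + 1))\<^sup>2 * b"
    by (simp add: power2_eq_square algebra_simps)
  moreover have "\<dots> = a\<^sup>2 * (2 * (\<bar>b\<bar> + 1) + b)" unfolding tc by (simp add: power2_eq_square algebra_simps)
  ultimately have "(2 * t * a + t\<^sup>2 * b) * (\<bar>b\<bar> + 1)\<^sup>2 = a\<^sup>2 * (2 * (\<bar>b\<bar> + 1) + b)" by simp
  with nn have le: "a\<^sup>2 * (2 * (\<bar>b\<bar> + 1) + b) \<le> 0" by simp
  have q: "2 * (\<bar>b\<bar> + 1) + b > 0" by (simp add: abs_if)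
  have "a\<^sup>2 \<le> 0"
  proof (rule ccontr)
    assume "\<not> a\<^sup>2 \<le> 0"
    then have "a\<^sup>2 > 0" by simp
    with q have "a\<^sup>2 * (2 * (\<bar>b\<bar> + 1) + b) > 0" by simp
    with le show False by simp
  qed
  then show ?thesis by simp
qed

lemma sigma_max_eq:
  assumes M: "M \<in> carrier_mat k p"
  shows "sigma_max M = spec_norm M"
proof -
  define s where "s = spec_norm M"
  have s0: "s \<ge> 0" unfolding s_def by (rule spec_norm_props(3)[OF M])
  have N1: "\<And>w. w \<in> carrier_vec p \<Longrightarrow> vnorm (M *\<^sub>v w) \<le> s * vnorm w"
    unfolding s_def by (rule spec_norm_props(2)[OF M])
  define H where "H = mat_adjoint M * M"
  have Hc: "H \<in> carrier_mat p p" unfolding H_def using adj_carrier[OF M] M by simp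
  define E where "E = {e. eigenvalue H e}"
  have finE: "finite E"
  proof -
    have "char_poly H \<noteq> 0" using degree_monic_char_poly[OF Hc] by auto
    then have "finite {x. poly (char_poly H) x = 0}" by (rule poly_roots_finite)
    moreover have "E = {x. poly (char_poly H) x = 0}" unfolding E_def
      using eigenvalue_root_char_poly[OF Hc] by auto
    ultimately show ?thesis by simp
  qed
  have bound: "Re e \<le> s\<^sup>2" if e: "e \<in> E" for e
  proof -
    obtain x where ev: "eigenvector H x e" using e unfolding E_def eigenvalue_def by auto
    then have x: "x \<in> carrier_vec p" "x \<noteq> 0\<^sub>v p" "H *\<^sub>v x = e \<cdot>\<^sub>v x"
      unfolding eigenvector_def using Hc by auto
    have xpos: "vnorm x > 0" using vnorm_zero_iff[OF x(1)] x(2) vnorm_nonneg[of x] by auto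
    have "cip x (H *\<^sub>v x) = e * complex_of_real ((vnorm x)\<^sup>2)"
      using x by (simp add: cip_smult2 cip_self)
    moreover have "cip x (H *\<^sub>v x) = complex_of_real ((vnorm (M *\<^sub>v x))\<^sup>2)"
      unfolding H_def using adj_cip[OF M x(1) x(1)] cip_self by simp
    ultimately have "e * complex_of_real ((vnorm x)\<^sup>2) = complex_of_real ((vnorm (M *\<^sub>v x))\<^sup>2)" by simp
    then have "Re (e * complex_of_real ((vnorm x)\<^sup>2)) = (vnorm (M *\<^sub>v x))\<^sup>2"
      by (metis Re_complex_of_real)
    then have "Re e * (vnorm x)\<^sup>2 = (vnorm (M *\<^sub>v x))\<^sup>2" by simp
    also have "\<dots> \<le> (s * vnorm x)\<^sup>2" using N1[OF x(1)] vnorm_nonneg by (simp add: power_mono)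
    also have "\<dots> = s\<^sup>2 * (vnorm x)\<^sup>2" by (simp add: power_mult_distrib)
    finally show ?thesis using xpos by simp
  qed
  have mem: "s\<^sup>2 \<in> insert 0 (Re ` E)"
  proof (cases "s = 0")
    case True then show ?thesis by simp
  next
    case False
    then have spos: "s > 0" using s0 by simp
    obtain v0 where v0: "v0 \<in> carrier_vec p" "vnorm v0 \<le> 1" "vnorm (M *\<^sub>v v0) = s"
      using spec_norm_props(1)[OF M] unfolding s_def by blast
    have v0pos: "vnorm v0 > 0"
    proof (rule ccontr)
      assume "\<not> vnorm v0 > 0"
      then have "v0 = 0\<^sub>v p" using vnorm_zero_iff[OF v0(1)] vnorm_nonneg[of v0] by simp
      then have "M *\<^sub>v v0 = 0\<^sub>v k" using M by auto
      then show False using v0(3) spos by (simp add: vnorm_def)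
    qed
    define v where "v = complex_of_real (1 / vnorm v0) \<cdot>\<^sub>v v0"
    have v: "v \<in> carrier_vec p" unfolding v_def using v0 by simp
    have vn: "vnorm v = 1" unfolding v_def using v0pos by (simp add: vnorm_smult norm_divide)
    have "M *\<^sub>v v = complex_of_real (1 / vnorm v0) \<cdot>\<^sub>v (M *\<^sub>v v0)"
      unfolding v_def by (rule mult_mat_vec[OF M v0(1)])
    then have "vnorm (M *\<^sub>v v) = s / vnorm v0" using v0pos v0(3) by (simp add: vnorm_smult norm_divide)
    moreover have "s / vnorm v0 \<ge> s" using v0pos v0(2) spos by (simp add: le_divide_eq)
    moreover have "vnorm (M *\<^sub>v v) \<le> s" using N1[OF v] vn by simp
    ultimately have Mvn: "vnorm (M *\<^sub>v v) = s" by simp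
    have az: "Re (cip (M *\<^sub>v w) (M *\<^sub>v v)) - s\<^sup>2 * Re (cip w v) = 0" if w: "w \<in> carrier_vec p" for w
    proof (rule quad_zero)
      fix t :: real
      let ?y = "v + complex_of_real t \<cdot>\<^sub>v w"
      have y: "?y \<in> carrier_vec p" using v w by simp
      have My: "M *\<^sub>v ?y = M *\<^sub>v v + complex_of_real t \<cdot>\<^sub>v (M *\<^sub>v w)"
        using M v w by (simp add: mult_add_distrib_mat_vec mult_mat_vec)
      have "(vnorm (M *\<^sub>v ?y))\<^sup>2 \<le> (s * vnorm ?y)\<^sup>2"
        using N1[OF y] vnorm_nonneg by (simp add: power_mono)
      also have "\<dots> = s\<^sup>2 * (vnorm ?y)\<^sup>2" by (simp add: power_mult_distrib)
      finally have ineq: "(vnorm (M *\<^sub>v ?y))\<^sup>2 \<le> s\<^sup>2 * (vnorm ?y)\<^sup>2" .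
      have e1: "(vnorm (M *\<^sub>v ?y))\<^sup>2 = s\<^sup>2 + 2 * t * Re (cip (M *\<^sub>v w) (M *\<^sub>v v)) + t\<^sup>2 * (vnorm (M *\<^sub>v w))\<^sup>2"
        unfolding My using M v w by (subst vn_expand) (auto simp: Mvn)
      have e2: "(vnorm ?y)\<^sup>2 = 1 + 2 * t * Re (cip w v) + t\<^sup>2 * (vnorm w)\<^sup>2"
        using v w by (subst vn_expand) (auto simp: vn)
      have "2 * t * (Re (cip (M *\<^sub>v w) (M *\<^sub>v v)) - s\<^sup>2 * Re (cip w v)) + t\<^sup>2 * ((vnorm (M *\<^sub>v w))\<^sup>2 - s\<^sup>2 * (vnorm w)\<^sup>2)
          = (vnorm (M *\<^sub>v ?y))\<^sup>2 - s\<^sup>2 * (vnorm ?y)\<^sup>2"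
        unfolding e1 e2 by (simp add: algebra_simps)
      with ineq show "2 * t * (Re (cip (M *\<^sub>v w) (M *\<^sub>v v)) - s\<^sup>2 * Re (cip w v)) + t\<^sup>2 * ((vnorm (M *\<^sub>v w))\<^sup>2 - s\<^sup>2 * (vnorm w)\<^sup>2) \<le> 0"
        by simp
    qed
    define u where "u = H *\<^sub>v v + (- complex_of_real (s\<^sup>2)) \<cdot>\<^sub>v v"
    have u: "u \<in> carrier_vec p" unfolding u_def using Hc v by simp
    have "cip u (H *\<^sub>v v + (- complex_of_real (s\<^sup>2)) \<cdot>\<^sub>v v) = cip u (H *\<^sub>v v) + (- complex_of_real (s\<^sup>2)) * cip u v"
      using Hc v u by (simp add: cip_add2 cip_smult2)
    then have "cip u u = cip u (H *\<^sub>v v) + (- complex_of_real (s\<^sup>2)) * cip u v"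
      by (simp only: u_def[symmetric])
    then have "Re (cip u u) = Re (cip u (H *\<^sub>v v)) - s\<^sup>2 * Re (cip u v)" by simp
    also have "cip u (H *\<^sub>v v) = cip (M *\<^sub>v u) (M *\<^sub>v v)" unfolding H_def using adj_cip[OF M v u] by simp
    finally have "Re (cip u u) = 0" using az[OF u] by simp
    then have "vnorm u = 0" by (simp add: cip_self)
    then have u0: "u = 0\<^sub>v p" using vnorm_zero_iff[OF u] by simp
    have Hv: "H *\<^sub>v v = complex_of_real (s\<^sup>2) \<cdot>\<^sub>v v"
    proof (rule eq_vecI)
      fix i assume i: "i < dim_vec (complex_of_real (s\<^sup>2) \<cdot>\<^sub>v v)"
      have "u $ i = 0" using u0 i v by simp
      then show "(H *\<^sub>v v) $ i = (complex_of_real (s\<^sup>2) \<cdot>\<^sub>v v) $ i"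
        unfolding u_def using i v Hc by simp
    qed (use Hc v in simp)
    have "v \<noteq> 0\<^sub>v p" using vn vnorm_zero_iff[OF v] by simp
    then have "eigenvector H v (complex_of_real (s\<^sup>2))" unfolding eigenvector_def using v Hc Hv by simp
    then have "complex_of_real (s\<^sup>2) \<in> E" unfolding E_def eigenvalue_def by auto
    then show ?thesis by force
  qed
  have "Max (insert 0 (Re ` E)) = s\<^sup>2"
  proof (rule Max_eqI)
    show "finite (insert 0 (Re ` E))" using finE by simp
    show "s\<^sup>2 \<in> insert 0 (Re ` E)" by (rule mem)
    fix y assume "y \<in> insert 0 (Re ` E)"
    then show "y \<le> s\<^sup>2" using bound by auto
  qed
  then show ?thesis unfolding sigma_max_def s_def[symmetric] H_def[symmetric] E_def[symmetric] using s0 by simp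
qed


lemma mat_mult_zero_vec[simp]: "A \<in> carrier_mat k p \<Longrightarrow> A *\<^sub>v 0\<^sub>v p = (0\<^sub>v k :: complex vec)"
  by (intro eq_vecI) (auto simp: scalar_prod_def)

lemma vec_minus_eq0:
  fixes a b :: "complex vec"
  assumes a: "a \<in> carrier_vec n" and b: "b \<in> carrier_vec n" and e: "a - b = 0\<^sub>v n"
  shows "a = b"
proof (rule eq_vecI)
  fix i assume i: "i < dim_vec b"
  have "(a - b) $ i = 0" using e i b by simp
  then show "a $ i = b $ i" using i a b by simp
qed (use a b in simp)

lemma det_pert:
  fixes S :: "complex mat"
  assumes S: "S \<in> carrier_mat N N" and Si: "Si \<in> carrier_mat N N"
    and SSi: "S * Si = 1\<^sub>m N" and SiS: "Si * S = 1\<^sub>m N"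
    and U: "U \<in> carrier_mat N m" and D: "D \<in> carrier_mat m q" and V: "V \<in> carrier_mat q N"
  shows "det (S - U * D * V) = 0 \<longleftrightarrow> det (1\<^sub>m m - D * (V * Si * U)) = 0"
proof -
  have UDV: "U * D * V \<in> carrier_mat N N" using U D V by simp
  have X: "V * Si * U \<in> carrier_mat q m" using U V Si by simp
  have DX: "D * (V * Si * U) \<in> carrier_mat m m" using D X by simp
  have VSi: "V * Si \<in> carrier_mat q N" using V Si by simp
  have as4: "(D * (V * Si * U)) *\<^sub>v w = D *\<^sub>v (V *\<^sub>v (Si *\<^sub>v (U *\<^sub>v w)))" if w: "w \<in> carrier_vec m" for w
  proof -
    have "(D * (V * Si * U)) *\<^sub>v w = D *\<^sub>v ((V * Si * U) *\<^sub>v w)" by (rule assoc_mult_mat_vec[OF D X w])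
    also have "(V * Si * U) *\<^sub>v w = (V * Si) *\<^sub>v (U *\<^sub>v w)" by (rule assoc_mult_mat_vec[OF VSi U w])
    also have "\<dots> = V *\<^sub>v (Si *\<^sub>v (U *\<^sub>v w))" by (rule assoc_mult_mat_vec[OF V Si]) (use U w in simp)
    finally show ?thesis .
  qed
  have SD: "S - U * D * V \<in> carrier_mat N N" using UDV by (rule minus_carrier_mat)
  have ID: "1\<^sub>m m - D * (V * Si * U) \<in> carrier_mat m m" using DX by (rule minus_carrier_mat)
  show ?thesis
  proof
    assume "det (S - U * D * V) = 0"
    then obtain x where x: "x \<in> carrier_vec N" "x \<noteq> 0\<^sub>v N" "(S - U * D * V) *\<^sub>v x = 0\<^sub>v N"
      using det_0_iff_vec_prod_zero[OF SD] by auto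
    define w where "w = D *\<^sub>v (V *\<^sub>v x)"
    have w: "w \<in> carrier_vec m" unfolding w_def using D V x by simp
    have e1: "(S - U * D * V) *\<^sub>v x = S *\<^sub>v x - (U * D * V) *\<^sub>v x"
      by (rule minus_mult_distrib_mat_vec[OF S UDV x(1)])
    have UD: "U * D \<in> carrier_mat N q" using U D by simp
    have e2: "(U * D * V) *\<^sub>v x = U *\<^sub>v w" unfolding w_def 
      using assoc_mult_mat_vec[OF UD V x(1)] assoc_mult_mat_vec[OF U D, of "V *\<^sub>v x"] V x(1) by simp
    have z: "S *\<^sub>v x - U *\<^sub>v w = 0\<^sub>v N" using x(3) e1 e2 by simp
    have Sx: "S *\<^sub>v x = U *\<^sub>v w"
      by (rule vec_minus_eq0[OF _ _ z]) (use S U x w in auto)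
    have xe: "x = Si *\<^sub>v (U *\<^sub>v w)"
    proof -
      have "x = (Si * S) *\<^sub>v x" using SiS x by simp
      also have "\<dots> = Si *\<^sub>v (S *\<^sub>v x)" using Si S x by simp
      finally show ?thesis using Sx by simp
    qed
    have "w \<noteq> 0\<^sub>v m"
    proof
      assume "w = 0\<^sub>v m"
      then have "x = 0\<^sub>v N" using xe U Si by simp
      then show False using x by simp
    qed
    moreover have "(1\<^sub>m m - D * (V * Si * U)) *\<^sub>v w = 0\<^sub>v m"
    proof -
      have "(D * (V * Si * U)) *\<^sub>v w = D *\<^sub>v (V *\<^sub>v (Si *\<^sub>v (U *\<^sub>v w)))" by (rule as4[OF w])
      also have "\<dots> = w" using xe w_def by simp
      finally show ?thesis using DX w by (simp add: minus_mult_distrib_mat_vec[OF _ DX w])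
    qed
    ultimately show "det (1\<^sub>m m - D * (V * Si * U)) = 0"
      using det_0_iff_vec_prod_zero[OF ID] w by auto
  next
    assume "det (1\<^sub>m m - D * (V * Si * U)) = 0"
    then obtain w where w: "w \<in> carrier_vec m" "w \<noteq> 0\<^sub>v m" "(1\<^sub>m m - D * (V * Si * U)) *\<^sub>v w = 0\<^sub>v m"
      using det_0_iff_vec_prod_zero[OF ID] by auto
    have z: "w - (D * (V * Si * U)) *\<^sub>v w = 0\<^sub>v m"
      using w(3) DX w(1) by (simp add: minus_mult_distrib_mat_vec[OF _ DX w(1)])
    have DXw: "(D * (V * Si * U)) *\<^sub>v w = w"
      by (rule vec_minus_eq0[OF _ _ z, symmetric]) (use DX w in auto)
    define x where "x = Si *\<^sub>v (U *\<^sub>v w)"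
    have x: "x \<in> carrier_vec N" unfolding x_def using Si U w by simp
    have DVx: "D *\<^sub>v (V *\<^sub>v x) = w" using DXw as4[OF w(1)] unfolding x_def by simp
    have "x \<noteq> 0\<^sub>v N"
    proof
      assume "x = 0\<^sub>v N"
      then have "D *\<^sub>v (V *\<^sub>v x) = 0\<^sub>v m" using D V by simp
      then show False using DVx w by simp
    qed
    moreover have "(S - U * D * V) *\<^sub>v x = 0\<^sub>v N"
    proof -
      have f1: "S *\<^sub>v x = U *\<^sub>v w"
      proof -
        have "S *\<^sub>v x = (S * Si) *\<^sub>v (U *\<^sub>v w)" unfolding x_def using S Si U w by simp
        then show ?thesis using SSi U w by simp
      qed
      have UD: "U * D \<in> carrier_mat N q" using U D by simp
      have f2: "(U * D * V) *\<^sub>v x = U *\<^sub>v w"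
        using assoc_mult_mat_vec[OF UD V x] assoc_mult_mat_vec[OF U D, of "V *\<^sub>v x"] V x DVx by simp
      from f1 f2 show ?thesis using S UDV x U w by (simp add: minus_mult_distrib_mat_vec[OF S UDV x])
    qed
    ultimately show "det (S - U * D * V) = 0"
      using det_0_iff_vec_prod_zero[OF SD] x by auto
  qed
qed


lemma cs_cip: assumes "dim_vec z = dim_vec y" shows "cmod (cip y z) \<le> vnorm y * vnorm z"
proof -
  have "cmod (cip y z) \<le> (\<Sum>i<dim_vec y. cmod (cnj (y $ i) * z $ i))"
    unfolding cip_def by (rule norm_sum)
  also have "\<dots> = (\<Sum>i<dim_vec y. \<bar>cmod (y $ i)\<bar> * \<bar>cmod (z $ i)\<bar>)" by (simp add: norm_mult)
  also have "\<dots> \<le> L2_set (\<lambda>i. cmod (y $ i)) {..<dim_vec y} * L2_set (\<lambda>i. cmod (z $ i)) {..<dim_vec y}"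
    by (rule L2_set_mult_ineq)
  also have "\<dots> = vnorm y * vnorm z" unfolding L2_set_def vnorm_def using assms by simp
  finally show ?thesis .
qed

lemma inf_formula:
  fixes X :: "complex mat"
  assumes X: "X \<in> carrier_mat q m"
    and ne: "\<exists>D. D \<in> carrier_mat m q \<and> det (1\<^sub>m m - D * X) = 0"
  shows "Inf {ereal (spec_norm D) | D. D \<in> carrier_mat m q \<and> det (1\<^sub>m m - D * X) = 0}
         = inverse (ereal (sigma_max X))"
proof -
  define s where "s = spec_norm X"
  have sig: "sigma_max X = s" unfolding s_def by (rule sigma_max_eq[OF X])
  have s0: "s \<ge> 0" unfolding s_def by (rule spec_norm_props(3)[OF X])
  have N1X: "\<And>w. w \<in> carrier_vec m \<Longrightarrow> vnorm (X *\<^sub>v w) \<le> s * vnorm w"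
    unfolding s_def by (rule spec_norm_props(2)[OF X])
  have lower: "1 \<le> spec_norm D * s" if D: "D \<in> carrier_mat m q" and dt: "det (1\<^sub>m m - D * X) = 0" for D
  proof -
    have DX: "D * X \<in> carrier_mat m m" using D X by simp
    have ID: "1\<^sub>m m - D * X \<in> carrier_mat m m" using DX by (rule minus_carrier_mat)
    obtain w where w: "w \<in> carrier_vec m" "w \<noteq> 0\<^sub>v m" "(1\<^sub>m m - D * X) *\<^sub>v w = 0\<^sub>v m"
      using det_0_iff_vec_prod_zero[OF ID] dt by auto
    have z: "w - (D * X) *\<^sub>v w = 0\<^sub>v m"
      using w(3) DX w(1) by (simp add: minus_mult_distrib_mat_vec[OF _ DX w(1)])
    have "(D * X) *\<^sub>v w = w"
      by (rule vec_minus_eq0[OF _ _ z, symmetric]) (use DX w in auto)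
    then have DXw: "D *\<^sub>v (X *\<^sub>v w) = w" using assoc_mult_mat_vec[OF D X w(1)] by simp
    have wpos: "vnorm w > 0" using vnorm_zero_iff[OF w(1)] w(2) vnorm_nonneg[of w] by auto
    have "vnorm w \<le> spec_norm D * vnorm (X *\<^sub>v w)"
      using spec_norm_props(2)[OF D, of "X *\<^sub>v w"] X w DXw by simp
    also have "\<dots> \<le> spec_norm D * (s * vnorm w)"
      using N1X[OF w(1)] spec_norm_props(3)[OF D] by (simp add: mult_left_mono)
    finally have "1 * vnorm w \<le> (spec_norm D * s) * vnorm w" by (simp add: mult.assoc)
    then show ?thesis using wpos by (simp only: mult_le_cancel_right)
  qed
  from ne obtain D1 where "D1 \<in> carrier_mat m q" "det (1\<^sub>m m - D1 * X) = 0" by auto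
  from lower[OF this] have "s \<noteq> 0" by auto
  with s0 have spos: "s > 0" by simp
  obtain v where v: "v \<in> carrier_vec m" "vnorm v \<le> 1" "vnorm (X *\<^sub>v v) = s"
    using spec_norm_props(1)[OF X] unfolding s_def by blast
  define y where "y = X *\<^sub>v v"
  have y: "y \<in> carrier_vec q" "vnorm y = s" unfolding y_def using X v by auto
  define D0 where "D0 = mat m q (\<lambda>(i,j). v $ i * cnj (y $ j) / complex_of_real (s\<^sup>2))"
  have D0: "D0 \<in> carrier_mat m q" unfolding D0_def by simp
  have D0z: "D0 *\<^sub>v z = (cip y z / complex_of_real (s\<^sup>2)) \<cdot>\<^sub>v v" if z: "z \<in> carrier_vec q" for z
  proof (rule eq_vecI)
    fix i assume i: "i < dim_vec ((cip y z / complex_of_real (s\<^sup>2)) \<cdot>\<^sub>v v)"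
    then have im: "i < m" using v by simp
    have "(D0 *\<^sub>v z) $ i = (\<Sum>j<q. D0 $$ (i,j) * z $ j)" by (rule mv_index[OF D0 z im])
    also have "\<dots> = (\<Sum>j<q. v $ i * (cnj (y $ j) * z $ j) / complex_of_real (s\<^sup>2))"
      unfolding D0_def using im by (intro sum.cong refl) (simp add: mult.assoc)
    also have "\<dots> = v $ i * cip y z / complex_of_real (s\<^sup>2)"
      unfolding cip_def using y by (simp add: sum_divide_distrib[symmetric] sum_distrib_left)
    finally show "(D0 *\<^sub>v z) $ i = ((cip y z / complex_of_real (s\<^sup>2)) \<cdot>\<^sub>v v) $ i"
      using im v by simp
  qed (use D0 v in simp)
  have "cip y y = complex_of_real (s\<^sup>2)" using cip_self y by simp
  then have D0y: "D0 *\<^sub>v y = v" using D0z[OF y(1)] spos v by simp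
  have vne: "v \<noteq> 0\<^sub>v m"
  proof
    assume "v = 0\<^sub>v m"
    then have "X *\<^sub>v v = 0\<^sub>v q" using X by simp
    then show False using v(3) spos by (simp add: vnorm_def)
  qed
  have D0X: "D0 * X \<in> carrier_mat m m" using D0 X by simp
  have ID0: "1\<^sub>m m - D0 * X \<in> carrier_mat m m" using D0X by (rule minus_carrier_mat)
  have "(1\<^sub>m m - D0 * X) *\<^sub>v v = v - (D0 * X) *\<^sub>v v"
    using minus_mult_distrib_mat_vec[OF _ D0X v(1)] v by simp
  also have "(D0 * X) *\<^sub>v v = v" using assoc_mult_mat_vec[OF D0 X v(1)] D0y unfolding y_def by simp
  finally have "(1\<^sub>m m - D0 * X) *\<^sub>v v = 0\<^sub>v m" using v by simp
  then have dt0: "det (1\<^sub>m m - D0 * X) = 0" using det_0_iff_vec_prod_zero[OF ID0] v vne by auto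
  have up: "spec_norm D0 \<le> 1 / s"
  proof (rule spec_norm_le[OF D0])
    show "0 \<le> 1 / s" using spos by simp
    fix z :: "complex vec" assume z: "z \<in> carrier_vec q"
    have "vnorm (D0 *\<^sub>v z) = cmod (cip y z) / s\<^sup>2 * vnorm v"
      using D0z[OF z] by (simp add: vnorm_smult norm_divide norm_power)
    also have "\<dots> \<le> cmod (cip y z) / s\<^sup>2"
      using v(2) mult_left_le[of "vnorm v" "cmod (cip y z) / s\<^sup>2"] by (simp add: zero_le_divide_iff)
    also have "\<dots> \<le> (s * vnorm z) / s\<^sup>2"
      using cs_cip[of z y] y z spos by (simp add: divide_right_mono)
    also have "\<dots> = 1 / s * vnorm z" using spos by (simp add: power2_eq_square)
    finally show "vnorm (D0 *\<^sub>v z) \<le> 1 / s * vnorm z" .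
  qed
  let ?A = "{ereal (spec_norm D) | D. D \<in> carrier_mat m q \<and> det (1\<^sub>m m - D * X) = 0}"
  have "Inf ?A = ereal (1 / s)"
  proof (rule antisym)
    have "Inf ?A \<le> ereal (spec_norm D0)" by (rule Inf_lower) (use D0 dt0 in auto)
    also have "\<dots> \<le> ereal (1 / s)" using up by simp
    finally show "Inf ?A \<le> ereal (1 / s)" .
    show "ereal (1 / s) \<le> Inf ?A"
    proof (rule Inf_greatest)
      fix a assume "a \<in> ?A"
      then obtain D where D: "D \<in> carrier_mat m q" "det (1\<^sub>m m - D * X) = 0" and a: "a = ereal (spec_norm D)" by auto
      have "1 / s \<le> spec_norm D" using lower[OF D] spos by (simp add: divide_le_eq)
      then show "ereal (1 / s) \<le> a" using a by simp
    qed
  qed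
  then show ?thesis using sig spos by (simp add: inverse_eq_divide)
qed


lemma mm_index: "A \<in> carrier_mat a b \<Longrightarrow> B \<in> carrier_mat b c \<Longrightarrow> i < a \<Longrightarrow> j < c \<Longrightarrow>
  (A * B) $$ (i,j) = (\<Sum>k<b. A $$ (i,k) * B $$ (k,j))"
  by (auto simp: scalar_prod_def lessThan_atLeast0 intro!: sum.cong)

lemma U1_eq: "transpose_mat (hcat (1\<^sub>m r) (0\<^sub>m r n)) = (mat (r+n) r (\<lambda>(i,a). if i = a then 1 else 0) :: complex mat)"
  by (rule eq_matI) (auto simp: hcat_def)

lemma V1_eq: "hcat (0\<^sub>m n r) (1\<^sub>m n) = (mat n (r+n) (\<lambda>(b,j). if j = r + b then 1 else 0) :: complex mat)"
  by (rule eq_matI) (auto simp: hcat_def)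

lemma U2_eq: "transpose_mat (hcat (0\<^sub>m n r) (1\<^sub>m n)) = (mat (r+n) n (\<lambda>(i,b). if i = r + b then 1 else 0) :: complex mat)"
  by (rule eq_matI) (auto simp: hcat_def)

lemma V2_eq: "hcat (1\<^sub>m r) (0\<^sub>m r n) = (mat r (r+n) (\<lambda>(a,j). if j = a then 1 else 0) :: complex mat)"
  by (rule eq_matI) (auto simp: hcat_def)

lemma blockB_eq:
  fixes DB :: "complex mat"
  assumes DB: "DB \<in> carrier_mat r n"
  shows "four_block_mat (0\<^sub>m r r) DB (0\<^sub>m n r) (0\<^sub>m n n) =
     transpose_mat (hcat (1\<^sub>m r) (0\<^sub>m r n)) * DB * hcat (0\<^sub>m n r) (1\<^sub>m n)"
proof -
  let ?U = "mat (r+n) r (\<lambda>(i,a). if i = a then 1 else 0) :: complex mat"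
  let ?V = "mat n (r+n) (\<lambda>(b,j). if j = r + b then 1 else 0) :: complex mat"
  have UD: "?U * DB = mat (r+n) n (\<lambda>(i,b). if i < r then DB $$ (i,b) else 0)"
  proof (rule eq_matI)
    fix i j assume i: "i < dim_row (mat (r+n) n (\<lambda>(i,b). if i < r then DB $$ (i,b) else 0))"
      and j: "j < dim_col (mat (r+n) n (\<lambda>(i,b). if i < r then DB $$ (i,b) else 0))"
    have "(?U * DB) $$ (i,j) = (\<Sum>k<r. (if i = k then 1 else 0) * DB $$ (k,j))"
      using i j DB by (subst mm_index[of _ "r+n" r _ n]) auto
    also have "\<dots> = (if i < r then DB $$ (i,j) else 0)"
      by (simp add: if_distrib[of "\<lambda>x. x * _"] cong: if_cong)
    finally show "(?U * DB) $$ (i,j) = mat (r+n) n (\<lambda>(i,b). if i < r then DB $$ (i,b) else 0) $$ (i,j)"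
      using i j by simp
  qed (use DB in auto)
  have "four_block_mat (0\<^sub>m r r) DB (0\<^sub>m n r) (0\<^sub>m n n) = mat (r+n) n (\<lambda>(i,b). if i < r then DB $$ (i,b) else 0) * ?V"
  proof (rule eq_matI)
    fix i j assume i: "i < dim_row (mat (r+n) n (\<lambda>(i,b). if i < r then DB $$ (i,b) else 0) * ?V)"
      and j: "j < dim_col (mat (r+n) n (\<lambda>(i,b). if i < r then DB $$ (i,b) else 0) * ?V)"
    have "(mat (r+n) n (\<lambda>(i,b). if i < r then DB $$ (i,b) else 0) * ?V) $$ (i,j)
       = (\<Sum>k<n. (if i < r then DB $$ (i,k) else 0) * (if j = r + k then 1 else 0))"
      using i j by (subst mm_index[of _ "r+n" n _ "r+n"]) auto
    also have "\<dots> = (\<Sum>k<n. if k = j - r then (if i < r \<and> r \<le> j then DB $$ (i,k) else 0) else 0)"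
      by (intro sum.cong refl) auto
    also have "\<dots> = (if i < r \<and> r \<le> j then DB $$ (i, j - r) else 0)"
      using j by (auto simp: sum.delta)
    finally show "four_block_mat (0\<^sub>m r r) DB (0\<^sub>m n r) (0\<^sub>m n n) $$ (i,j) = 
      (mat (r+n) n (\<lambda>(i,b). if i < r then DB $$ (i,b) else 0) * ?V) $$ (i,j)"
      using i j DB by auto
  qed (use DB in auto)
  then show ?thesis unfolding U1_eq V1_eq UD[symmetric] by simp
qed

lemma blockC_eq:
  fixes DC :: "complex mat"
  assumes DC: "DC \<in> carrier_mat n r"
  shows "four_block_mat (0\<^sub>m r r) (0\<^sub>m r n) DC (0\<^sub>m n n) =
     transpose_mat (hcat (0\<^sub>m n r) (1\<^sub>m n)) * DC * hcat (1\<^sub>m r) (0\<^sub>m r n)"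
proof -
  let ?U = "mat (r+n) n (\<lambda>(i,b). if i = r + b then 1 else 0) :: complex mat"
  let ?V = "mat r (r+n) (\<lambda>(a,j). if j = a then 1 else 0) :: complex mat"
  let ?W = "mat (r+n) r (\<lambda>(i,a). if r \<le> i then DC $$ (i - r, a) else 0)"
  have UD: "?U * DC = ?W"
  proof (rule eq_matI)
    fix i j assume i: "i < dim_row ?W" and j: "j < dim_col ?W"
    have "(?U * DC) $$ (i,j) = (\<Sum>k<n. (if i = r + k then 1 else 0) * DC $$ (k,j))"
      using i j DC by (subst mm_index[of _ "r+n" n _ r]) auto
    also have "\<dots> = (\<Sum>k<n. if k = i - r then (if r \<le> i then DC $$ (k,j) else 0) else 0)"
      by (intro sum.cong refl) auto
    also have "\<dots> = (if r \<le> i then DC $$ (i - r,j) else 0)"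
      using i by (auto simp: sum.delta)
    finally show "(?U * DC) $$ (i,j) = ?W $$ (i,j)" using i j by simp
  qed (use DC in auto)
  have "four_block_mat (0\<^sub>m r r) (0\<^sub>m r n) DC (0\<^sub>m n n) = ?W * ?V"
  proof (rule eq_matI)
    fix i j assume i: "i < dim_row (?W * ?V)" and j: "j < dim_col (?W * ?V)"
    have "(?W * ?V) $$ (i,j) = (\<Sum>k<r. (if r \<le> i then DC $$ (i - r, k) else 0) * (if j = k then 1 else 0))"
      using i j by (subst mm_index[of _ "r+n" r _ "r+n"]) auto
    also have "\<dots> = (\<Sum>k<r. if k = j then (if r \<le> i then DC $$ (i - r, k) else 0) else 0)"
      by (intro sum.cong refl) auto
    also have "\<dots> = (if r \<le> i \<and> j < r then DC $$ (i - r, j) else 0)"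
      by (auto simp: sum.delta)
    finally show "four_block_mat (0\<^sub>m r r) (0\<^sub>m r n) DC (0\<^sub>m n n) $$ (i,j) = (?W * ?V) $$ (i,j)"
      using i j DC by auto
  qed (use DC in auto)
  then show ?thesis unfolding U2_eq V2_eq UD[symmetric] by simp
qed

lemma mpoly_carrier: "(\<forall>k\<le>d. As k \<in> carrier_mat n n) \<Longrightarrow> mpoly As d z \<in> carrier_mat n n"
  by (induction d) auto

lemma rosen_carrier:
  assumes "A \<in> carrier_mat r r" "B \<in> carrier_mat r n" "C \<in> carrier_mat n r" "\<forall>k\<le>d. As k \<in> carrier_mat n n"
  shows "rosen r A B C As d l \<in> carrier_mat (r + n) (r + n)"
  unfolding rosen_def using assms mpoly_carrier[OF assms(4)] by (intro four_block_carrier_mat) auto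

lemma Inf_lt_infty_ne: "Inf X < (\<infinity>::ereal) \<Longrightarrow> X \<noteq> {}" by (auto simp: top_ereal_def)

lemma part_i:
  fixes S Sinv :: "complex mat"
  assumes S: "S \<in> carrier_mat (r+n) (r+n)" and Si: "Sinv \<in> carrier_mat (r + n) (r + n)"
    and SSi: "S * Sinv = 1\<^sub>m (r + n)" and SiS: "Sinv * S = 1\<^sub>m (r + n)"
    and fin: "Inf {ereal (spec_norm DB) | DB. DB \<in> carrier_mat r n \<and>
     det (S - four_block_mat (0\<^sub>m r r) DB (0\<^sub>m n r) (0\<^sub>m n n)) = 0} < \<infinity>"
  shows "Inf {ereal (spec_norm DB) | DB. DB \<in> carrier_mat r n \<and>
     det (S - four_block_mat (0\<^sub>m r r) DB (0\<^sub>m n r) (0\<^sub>m n n)) = 0} =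
     inverse (ereal (sigma_max (hcat (0\<^sub>m n r) (1\<^sub>m n) * Sinv * transpose_mat (hcat (1\<^sub>m r) (0\<^sub>m r n)))))"
proof -
  let ?U = "transpose_mat (hcat (1\<^sub>m r) (0\<^sub>m r n)) :: complex mat"
  let ?V = "hcat (0\<^sub>m n r) (1\<^sub>m n) :: complex mat"
  have U: "?U \<in> carrier_mat (r+n) r" unfolding U1_eq by simp
  have V: "?V \<in> carrier_mat n (r+n)" unfolding V1_eq by simp
  have X: "?V * Sinv * ?U \<in> carrier_mat n r" using U V Si by simp
  have eqv: "(DB \<in> carrier_mat r n \<and> det (S - four_block_mat (0\<^sub>m r r) DB (0\<^sub>m n r) (0\<^sub>m n n)) = 0) \<longleftrightarrow>
     (DB \<in> carrier_mat r n \<and> det (1\<^sub>m r - DB * (?V * Sinv * ?U)) = 0)" for DB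
    using blockB_eq[of DB r n] det_pert[OF S Si SSi SiS U _ V, of DB] by auto
  have "{ereal (spec_norm DB) | DB. DB \<in> carrier_mat r n \<and>
     det (S - four_block_mat (0\<^sub>m r r) DB (0\<^sub>m n r) (0\<^sub>m n n)) = 0} =
     {ereal (spec_norm DB) | DB. DB \<in> carrier_mat r n \<and> det (1\<^sub>m r - DB * (?V * Sinv * ?U)) = 0}"
    using eqv by blast
  moreover have "\<exists>D. D \<in> carrier_mat r n \<and> det (1\<^sub>m r - D * (?V * Sinv * ?U)) = 0"
    using Inf_lt_infty_ne[OF fin] eqv by blast
  ultimately show ?thesis using inf_formula[OF X] by simp
qed

lemma part_ii:
  fixes S Sinv :: "complex mat"
  assumes S: "S \<in> carrier_mat (r+n) (r+n)" and Si: "Sinv \<in> carrier_mat (r + n) (r + n)"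
    and SSi: "S * Sinv = 1\<^sub>m (r + n)" and SiS: "Sinv * S = 1\<^sub>m (r + n)"
    and fin: "Inf {ereal (spec_norm DC) | DC. DC \<in> carrier_mat n r \<and>
     det (S - four_block_mat (0\<^sub>m r r) (0\<^sub>m r n) DC (0\<^sub>m n n)) = 0} < \<infinity>"
  shows "Inf {ereal (spec_norm DC) | DC. DC \<in> carrier_mat n r \<and>
     det (S - four_block_mat (0\<^sub>m r r) (0\<^sub>m r n) DC (0\<^sub>m n n)) = 0} =
     inverse (ereal (sigma_max (hcat (1\<^sub>m r) (0\<^sub>m r n) * Sinv * transpose_mat (hcat (0\<^sub>m n r) (1\<^sub>m n)))))"
proof -
  let ?U = "transpose_mat (hcat (0\<^sub>m n r) (1\<^sub>m n)) :: complex mat"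
  let ?V = "hcat (1\<^sub>m r) (0\<^sub>m r n) :: complex mat"
  have U: "?U \<in> carrier_mat (r+n) n" unfolding U2_eq by simp
  have V: "?V \<in> carrier_mat r (r+n)" unfolding V2_eq by simp
  have X: "?V * Sinv * ?U \<in> carrier_mat r n" using U V Si by simp
  have eqv: "(DC \<in> carrier_mat n r \<and> det (S - four_block_mat (0\<^sub>m r r) (0\<^sub>m r n) DC (0\<^sub>m n n)) = 0) \<longleftrightarrow>
     (DC \<in> carrier_mat n r \<and> det (1\<^sub>m n - DC * (?V * Sinv * ?U)) = 0)" for DC
    using blockC_eq[of DC n r] det_pert[OF S Si SSi SiS U _ V, of DC] by auto
  have "{ereal (spec_norm DC) | DC. DC \<in> carrier_mat n r \<and>
     det (S - four_block_mat (0\<^sub>m r r) (0\<^sub>m r n) DC (0\<^sub>m n n)) = 0} =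
     {ereal (spec_norm DC) | DC. DC \<in> carrier_mat n r \<and> det (1\<^sub>m n - DC * (?V * Sinv * ?U)) = 0}"
    using eqv by blast
  moreover have "\<exists>D. D \<in> carrier_mat n r \<and> det (1\<^sub>m n - D * (?V * Sinv * ?U)) = 0"
    using Inf_lt_infty_ne[OF fin] eqv by blast
  ultimately show ?thesis using inf_formula[OF X] by simp
qed


lemma sum_block: "(\<Sum>c<K*n. f c) = (\<Sum>k<K. \<Sum>x<n. f (k*n + x))" for f :: "nat \<Rightarrow> complex"
proof -
  have aux: "\<And>k. k \<in> {..<K} \<Longrightarrow> sum f {k*n..<k*n+n} = (\<Sum>x<n. f (k*n + x))"
    by (simp add: sum.atLeastLessThan_shift_0[of f] atLeast0LessThan o_def)
  have "(\<Sum>c<K*n. f c) = (\<Sum>k<K. sum f {k*n..<k*n+n})" by (rule sum.nat_group[symmetric])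
  also have "\<dots> = (\<Sum>k<K. \<Sum>x<n. f (k*n + x))" by (rule sum.cong[OF refl aux])
  finally show ?thesis .
qed

lemma foldr_hcat_closed:
  assumes "\<forall>F\<in>set Fs. F \<in> carrier_mat m m"
  shows "foldr hcat Fs (0\<^sub>m m 0) = mat m (length Fs * m) (\<lambda>(i,j). Fs ! (j div m) $$ (i, j mod m))"
  using assms
proof (induction Fs)
  case Nil
  then show ?case by (intro eq_matI) auto
next
  case (Cons F Fs)
  have F: "F \<in> carrier_mat m m" using Cons.prems by simp
  have IH: "foldr hcat Fs (0\<^sub>m m 0) = mat m (length Fs * m) (\<lambda>(i,j). Fs ! (j div m) $$ (i, j mod m))"
    using Cons by simp
  show ?case unfolding foldr.simps o_def IH unfolding hcat_def
  proof (rule eq_matI, goal_cases)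
    case (1 i j)
    then have i: "i < m" and j: "j < m + length Fs * m" by auto
    show ?case
    proof (cases "j < m")
      case True then show ?thesis using i F by simp
    next
      case False
      then have "j div m = Suc ((j - m) div m)" "j mod m = (j - m) mod m"
        using i by (auto simp: div_if mod_if)
      then show ?thesis using i j F False by simp
    qed
  qed (use F in auto)
qed

lemma foldr_rows_closed:
  assumes "\<forall>R\<in>set Rs. R \<in> carrier_mat p c"
  shows "foldr (@\<^sub>r) Rs (0\<^sub>m 0 c) = mat (length Rs * p) c (\<lambda>(i,j). Rs ! (i div p) $$ (i mod p, j))"
  using assms
proof (induction Rs)
  case Nil
  then show ?case by (intro eq_matI) auto
next
  case (Cons R Rs)
  have R: "R \<in> carrier_mat p c" using Cons.prems by simp
  have IH: "foldr (@\<^sub>r) Rs (0\<^sub>m 0 c) = mat (length Rs * p) c (\<lambda>(i,j). Rs ! (i div p) $$ (i mod p, j))"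
    using Cons by simp
  show ?case unfolding foldr.simps o_def IH unfolding append_rows_def
  proof (rule eq_matI, goal_cases)
    case (1 i j)
    then have i: "i < p + length Rs * p" and j: "j < c" by auto
    show ?case
    proof (cases "i < p")
      case True then show ?thesis using j R by simp
    next
      case False
      moreover have "p > 0" using i False by (cases p) auto
      ultimately have "i div p = Suc ((i - p) div p)" "i mod p = (i - p) mod p"
        by (auto simp: div_if mod_if)
      then show ?thesis using i j R False by simp
    qed
  qed (use R in auto)
qed

lemma diag_block_closed:
  assumes "\<forall>B\<in>set Bs. B \<in> carrier_mat p q"
  shows "diag_block_mat Bs = mat (length Bs * p) (length Bs * q)
     (\<lambda>(i,j). if i div p = j div q then Bs ! (i div p) $$ (i mod p, j mod q) else 0)"
  using assms
proof (induction Bs)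
  case Nil
  then show ?case by (intro eq_matI) auto
next
  case (Cons B Bs)
  have B: "B \<in> carrier_mat p q" using Cons.prems by simp
  define Z where "Z = mat (length Bs * p) (length Bs * q)
     (\<lambda>(i,j). if i div p = j div q then Bs ! (i div p) $$ (i mod p, j mod q) else (0::'a))"
  have IH: "diag_block_mat Bs = Z" using Cons unfolding Z_def by simp
  have Zd: "dim_row Z = length Bs * p" "dim_col Z = length Bs * q" unfolding Z_def by auto
  show ?case unfolding diag_block_mat.simps Let_def IH
  proof (rule eq_matI, goal_cases)
    case (1 i j)
    then have i: "i < p + length Bs * p" and j: "j < q + length Bs * q" by auto
    show ?case
    proof (cases "i < p")
      case True
      then show ?thesis
      proof (cases "j < q")
        case True then show ?thesis using \<open>i < p\<close> B Zd i j by simp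
      next
        case False
        moreover have "q > 0" using j False by (cases q) auto
        ultimately have "j div q \<noteq> 0" by (auto simp: div_greater_zero_iff)
        then show ?thesis using \<open>i < p\<close> False B Zd i j by simp
      qed
    next
      case False
      have "p > 0" using i False by (cases p) auto
      then have idv: "i div p = Suc ((i - p) div p)" "i mod p = (i - p) mod p"
        using False by (auto simp: div_if mod_if)
      show ?thesis
      proof (cases "j < q")
        case True
        then have "j div q = 0" by simp
        then show ?thesis using False True B Zd i j idv by simp
      next
        case jF: False
        have "q > 0" using j jF by (cases q) auto
        then have jdv: "j div q = Suc ((j - q) div q)" "j mod q = (j - q) mod q"
          using jF by (auto simp: div_if mod_if)
        show ?thesis using False jF B Zd i j idv jdv unfolding Z_def by simp
      qed
    qed
  qed (use B in \<open>auto simp: Z_def\<close>)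
qed


lemma powrow_closed: "powrow m d l = mat m ((d+1) * m) (\<lambda>(i,j). if i = j mod m then l ^ (j div m) else 0)"
proof -
  have "powrow m d l = mat m (length (map (\<lambda>k. (l ^ k) \<cdot>\<^sub>m 1\<^sub>m m) [0..<d + 1]) * m)
     (\<lambda>(i,j). (map (\<lambda>k. (l ^ k) \<cdot>\<^sub>m 1\<^sub>m m) [0..<d + 1]) ! (j div m) $$ (i, j mod m))"
    unfolding powrow_def by (rule foldr_hcat_closed) auto
  also have "\<dots> = mat m ((d+1) * m) (\<lambda>(i,j). if i = j mod m then l ^ (j div m) else 0)"
  proof (rule eq_matI, goal_cases)
    case (1 i j)
    then have i: "i < m" and j: "j < (d+1) * m" by auto
    then have jd: "j div m < d + 1" by (simp add: less_mult_imp_div_less)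
    have "(map (\<lambda>k. (l ^ k) \<cdot>\<^sub>m 1\<^sub>m m) [0..<d + 1]) ! (j div m) = (l ^ (j div m)) \<cdot>\<^sub>m 1\<^sub>m m"
      using jd by (simp del: upt_Suc)
    moreover have "j mod m < m" using i by simp
    ultimately show ?case using i j by auto
  qed auto
  finally show ?thesis .
qed

definition Ecol :: "nat \<Rightarrow> nat \<Rightarrow> complex mat" where
  "Ecol r n = 0\<^sub>m r n @\<^sub>r 1\<^sub>m n"

lemma Ecol_closed: "Ecol r n = mat (r+n) n (\<lambda>(x,y). if x = r + y then 1 else 0)"
  unfolding Ecol_def append_rows_def by (rule eq_matI) auto

lemma J1_closed: "J1 r n d = mat ((d+1)*(r+n)) ((d+1)*n)
   (\<lambda>(a,b). if a div (r+n) = b div n \<and> a mod (r+n) = r + b mod n then 1 else 0)"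
proof -
  have fb_triv: "four_block_mat X (0\<^sub>m (dim_row X) 0) (0\<^sub>m 0 (dim_col X)) (0\<^sub>m 0 0) = X" for X :: "complex mat"
    by (rule eq_matI) auto
  have J1: "J1 r n d = diag_block_mat (replicate (d+1) (Ecol r n))"
    unfolding J1_def J1t_def Ecol_def by (simp add: Let_def fb_triv)
  have "diag_block_mat (replicate (d+1) (Ecol r n)) = mat ((d+1)*(r+n)) ((d+1)*n)
     (\<lambda>(i,j). if i div (r+n) = j div n then replicate (d+1) (Ecol r n) ! (i div (r+n)) $$ (i mod (r+n), j mod n) else 0)"
    by (subst diag_block_closed[of _ "r+n" n]) (auto simp: Ecol_closed simp del: replicate_Suc)
  also have "\<dots> = mat ((d+1)*(r+n)) ((d+1)*n)
   (\<lambda>(a,b). if a div (r+n) = b div n \<and> a mod (r+n) = r + b mod n then 1 else 0)"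
  proof (rule eq_matI, goal_cases)
    case (1 i j)
    then have i: "i < (d+1)*(r+n)" and j: "j < (d+1)*n" by auto
    then have id: "i div (r+n) < d+1" by (simp add: less_mult_imp_div_less)
    have n0: "n > 0" using j by (cases n) auto
    have rn0: "r + n > 0" using n0 by simp
    have "replicate (d+1) (Ecol r n) ! (i div (r+n)) = Ecol r n" using id by (simp del: replicate_Suc)
    then show ?case using i j n0 rn0 by (auto simp: Ecol_closed)
  qed auto
  finally show ?thesis unfolding J1 .
qed

lemma sum_divmod: fixes K N :: nat shows "(\<Sum>a<K*N. g (a div N) (a mod N)) = (\<Sum>k<K. \<Sum>x<N. g k x :: complex)"
proof (cases "N = 0")
  case True then show ?thesis by simp
next
  case False
  have "(\<Sum>a<K*N. g (a div N) (a mod N)) = (\<Sum>k<K. \<Sum>x<N. g ((k*N+x) div N) ((k*N+x) mod N))"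
    by (rule sum_block)
  also have "\<dots> = (\<Sum>k<K. \<Sum>x<N. g k x)"
    using False by (intro sum.cong refl) simp
  finally show ?thesis .
qed

lemma J2_closed: "J2 r n d = mat ((d+1)*n) (r+n) (\<lambda>(c,j). if j = r + c mod n then 1 else 0)"
proof -
  have J2: "J2 r n d = foldr (@\<^sub>r) (replicate (d+1) (hcat (0\<^sub>m n r) (1\<^sub>m n))) (0\<^sub>m 0 (r + n))"
    unfolding J2_def J2t_def by simp
  have "\<dots> = mat ((d+1)*n) (r+n) (\<lambda>(i,j). replicate (d+1) (hcat (0\<^sub>m n r) (1\<^sub>m n)) ! (i div n) $$ (i mod n, j))"
    by (subst foldr_rows_closed[of _ n "r+n"]) (auto simp: V1_eq simp del: replicate_Suc)
  also have "\<dots> = mat ((d+1)*n) (r+n) (\<lambda>(c,j). if j = r + c mod n then 1 else 0)"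
  proof (rule eq_matI, goal_cases)
    case (1 i j)
    then have i: "i < (d+1)*n" and j: "j < r + n" by auto
    then have id: "i div n < d+1" by (simp add: less_mult_imp_div_less)
    have n0: "n > 0" using i by (cases n) auto
    have "replicate (d+1) (hcat (0\<^sub>m n r) (1\<^sub>m n)) ! (i div n) = hcat (0\<^sub>m n r) (1\<^sub>m n)"
      using id by (simp del: replicate_Suc)
    then show ?case using i j n0 by (simp add: V1_eq)
  qed auto
  finally show ?thesis unfolding J2 .
qed

lemma Dblk_closed:
  assumes "length Ds = d+1" "\<forall>D\<in>set Ds. D \<in> carrier_mat n n"
  shows "diag_block_mat Ds = mat ((d+1)*n) ((d+1)*n)
     (\<lambda>(i,j). if i div n = j div n then Ds ! (i div n) $$ (i mod n, j mod n) else 0)"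
  using diag_block_closed[OF assms(2)] assms(1) by simp

lemma mpoly_index:
  assumes "\<forall>k\<le>d. As k \<in> carrier_mat n n" "a < n" "b < n"
  shows "mpoly As d z $$ (a,b) = (\<Sum>k<d+1. z^k * As k $$ (a,b))"
  using assms(1)
proof (induction d)
  case 0 then show ?case by simp
next
  case (Suc d)
  have c: "mpoly As d z \<in> carrier_mat n n" using Suc.prems by (intro mpoly_carrier) auto
  have c2: "As (Suc d) \<in> carrier_mat n n" using Suc.prems by auto
  have "mpoly As (Suc d) z $$ (a,b) = mpoly As d z $$ (a,b) + z ^ Suc d * As (Suc d) $$ (a,b)"
    using c c2 assms(2,3) by simp
  then show ?case using Suc by simp
qed

lemma PJ_closed: "powrow (r+n) d l * J1 r n d = mat (r+n) ((d+1)*n) (\<lambda>(i,b). if i = r + b mod n then l^(b div n) else 0)"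
proof (rule eq_matI, goal_cases)
  case (1 i b)
  then have i: "i < r+n" and b: "b < (d+1)*n" by auto
  then have bd: "b div n < d+1" by (simp add: less_mult_imp_div_less)
  let ?N = "r+n"
  have "(powrow (r+n) d l * J1 r n d) $$ (i,b) = (\<Sum>a<(d+1)*?N. (if i = a mod ?N then l ^ (a div ?N) else 0) *
      (if a div ?N = b div n \<and> a mod ?N = r + b mod n then 1 else 0))"
    unfolding powrow_closed J1_closed using i b by (subst mm_index[of _ "r+n" "(d+1)*(r+n)" _ "(d+1)*n"]) auto
  also have "\<dots> = (\<Sum>k<d+1. \<Sum>x<?N. (if i = x then l ^ k else 0) * (if k = b div n \<and> x = r + b mod n then 1 else 0))"
    by (rule sum_divmod[where g = "\<lambda>k x. (if i = x then l ^ k else 0) * (if k = b div n \<and> x = r + b mod n then 1 else 0)"])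
  also have "\<dots> = (\<Sum>k<d+1. if k = b div n then (if i = r + b mod n then l ^ k else 0) else 0)"
  proof (rule sum.cong[OF refl])
    fix k assume "k \<in> {..<d+1}"
    have "(\<Sum>x<?N. (if i = x then l ^ k else 0) * (if k = b div n \<and> x = r + b mod n then 1 else 0))
       = (\<Sum>x<?N. if x = i then (if k = b div n \<and> i = r + b mod n then l ^ k else 0) else 0)"
      by (intro sum.cong refl) auto
    also have "\<dots> = (if k = b div n \<and> i = r + b mod n then l ^ k else 0)" using i by (simp add: sum.delta)
    finally show "(\<Sum>x<?N. (if i = x then l ^ k else 0) * (if k = b div n \<and> x = r + b mod n then 1 else 0))
       = (if k = b div n then (if i = r + b mod n then l ^ k else 0) else 0)" by simp
  qed
  also have "\<dots> = (if i = r + b mod n then l ^ (b div n) else 0)" using bd by (simp add: sum.delta)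
  finally show ?case using i b by simp
qed (auto simp: powrow_closed J1_closed)

lemma Dblk_DA:
  assumes DA: "\<forall>j\<le>d. DA j \<in> carrier_mat n n"
  shows "diag_block_mat (map DA [0..<d+1]) = mat ((d+1)*n) ((d+1)*n)
     (\<lambda>(i,j). if i div n = j div n then DA (i div n) $$ (i mod n, j mod n) else 0)"
proof -
  have "diag_block_mat (map DA [0..<d+1]) = mat ((d+1)*n) ((d+1)*n)
     (\<lambda>(i,j). if i div n = j div n then (map DA [0..<d+1]) ! (i div n) $$ (i mod n, j mod n) else 0)"
    by (rule Dblk_closed) (use DA in \<open>auto simp del: upt_Suc\<close>)
  also have "\<dots> = mat ((d+1)*n) ((d+1)*n)
     (\<lambda>(i,j). if i div n = j div n then DA (i div n) $$ (i mod n, j mod n) else 0)"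
  proof (rule eq_matI, goal_cases)
    case (1 i j)
    then have i: "i < (d+1)*n" and j: "j < (d+1)*n" by auto
    then have id: "i div n < d+1" by (simp add: less_mult_imp_div_less)
    have nth: "\<And>k. k < d+1 \<Longrightarrow> (map DA [0..<d+1]) ! k = DA k" by (simp del: upt_Suc)
    show ?case using i j id nth[OF id] by (auto simp del: upt_Suc)
  qed auto
  finally show ?thesis .
qed

lemma Dblk_carrier:
  assumes DA: "\<forall>j\<le>d. DA j \<in> carrier_mat n n"
  shows "diag_block_mat (map DA [0..<d+1]) \<in> carrier_mat ((d+1)*n) ((d+1)*n)"
    "diag_block_mat (map DA [0..<Suc d]) \<in> carrier_mat (Suc d*n) (Suc d*n)"
  using Dblk_DA[OF DA] by (auto simp del: upt_Suc)

lemma PJD_closed: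
  assumes DA: "\<forall>j\<le>d. DA j \<in> carrier_mat n n"
  shows "powrow (r+n) d l * J1 r n d * diag_block_mat (map DA [0..<d+1]) =
    mat (r+n) ((d+1)*n) (\<lambda>(i,c). if r \<le> i then l^(c div n) * DA (c div n) $$ (i - r, c mod n) else 0)"
proof (rule eq_matI, goal_cases)
  case (1 i c)
  then have i: "i < r+n" and c: "c < (d+1)*n" by auto
  then have cd: "c div n < d+1" by (simp add: less_mult_imp_div_less)
  have "(powrow (r+n) d l * J1 r n d * diag_block_mat (map DA [0..<d+1])) $$ (i,c) =
     (\<Sum>b<(d+1)*n. (if i = r + b mod n then l^(b div n) else 0) *
       (if b div n = c div n then DA (b div n) $$ (b mod n, c mod n) else 0))"
    unfolding PJ_closed Dblk_DA[OF DA] using i c by (subst mm_index[of _ "r+n" "(d+1)*n" _ "(d+1)*n"]) auto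
  also have "\<dots> = (\<Sum>k<d+1. \<Sum>x<n. (if i = r + x then l^k else 0) *
       (if k = c div n then DA k $$ (x, c mod n) else 0))"
    by (rule sum_divmod[where g = "\<lambda>k x. (if i = r + x then l^k else 0) *
       (if k = c div n then DA k $$ (x, c mod n) else 0)"])
  also have "\<dots> = (\<Sum>k<d+1. if k = c div n then (if r \<le> i then l^k * DA k $$ (i - r, c mod n) else 0) else 0)"
  proof (rule sum.cong[OF refl])
    fix k assume "k \<in> {..<d+1}"
    have "(\<Sum>x<n. (if i = r + x then l^k else 0) * (if k = c div n then DA k $$ (x, c mod n) else 0))
      = (\<Sum>x<n. if x = i - r then (if k = c div n \<and> r \<le> i then l^k * DA k $$ (i - r, c mod n) else 0) else 0)"
      by (intro sum.cong refl) auto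
    also have "\<dots> = (if k = c div n \<and> r \<le> i then l^k * DA k $$ (i - r, c mod n) else 0)"
      using i by (auto simp: sum.delta)
    finally show "(\<Sum>x<n. (if i = r + x then l^k else 0) * (if k = c div n then DA k $$ (x, c mod n) else 0))
      = (if k = c div n then (if r \<le> i then l^k * DA k $$ (i - r, c mod n) else 0) else 0)" by simp
  qed
  also have "\<dots> = (if r \<le> i then l^(c div n) * DA (c div n) $$ (i - r, c mod n) else 0)"
    using cd by (simp add: sum.delta)
  finally show ?case using i c by simp
qed (use carrier_matD[OF Dblk_carrier(2)[OF DA]] in \<open>auto simp: powrow_closed J1_closed simp del: upt_Suc\<close>)

lemma blockP_eq:
  assumes DA: "\<forall>j\<le>d. DA j \<in> carrier_mat n n"
  shows "four_block_mat (0\<^sub>m r r) (0\<^sub>m r n) (0\<^sub>m n r) (mpoly DA d l) =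
    powrow (r+n) d l * J1 r n d * diag_block_mat (map DA [0..<d+1]) * J2 r n d"
proof (rule eq_matI, goal_cases)
  case (1 i j)
  then have i: "i < r+n" and j: "j < r+n" by (auto simp: J2_closed powrow_closed)
  have "(powrow (r+n) d l * J1 r n d * diag_block_mat (map DA [0..<d+1]) * J2 r n d) $$ (i,j) =
     (\<Sum>c<(d+1)*n. (if r \<le> i then l^(c div n) * DA (c div n) $$ (i - r, c mod n) else 0) *
        (if j = r + c mod n then 1 else 0))"
    unfolding PJD_closed[OF DA] J2_closed using i j by (subst mm_index[of _ "r+n" "(d+1)*n" _ "r+n"]) auto
  also have "\<dots> = (\<Sum>k<d+1. \<Sum>x<n. (if r \<le> i then l^k * DA k $$ (i - r, x) else 0) * (if j = r + x then 1 else 0))"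
    by (rule sum_divmod[where g = "\<lambda>k x. (if r \<le> i then l^k * DA k $$ (i - r, x) else 0) * (if j = r + x then 1 else 0)"])
  also have "\<dots> = (\<Sum>k<d+1. if r \<le> i \<and> r \<le> j then l^k * DA k $$ (i - r, j - r) else 0)"
  proof (rule sum.cong[OF refl])
    fix k assume "k \<in> {..<d+1}"
    have "(\<Sum>x<n. (if r \<le> i then l^k * DA k $$ (i - r, x) else 0) * (if j = r + x then 1 else 0))
      = (\<Sum>x<n. if x = j - r then (if r \<le> i \<and> r \<le> j then l^k * DA k $$ (i - r, j - r) else 0) else 0)"
      by (intro sum.cong refl) auto
    also have "\<dots> = (if r \<le> i \<and> r \<le> j then l^k * DA k $$ (i - r, j - r) else 0)"
      using j by (auto simp: sum.delta)
    finally show "(\<Sum>x<n. (if r \<le> i then l^k * DA k $$ (i - r, x) else 0) * (if j = r + x then 1 else 0))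
      = (if r \<le> i \<and> r \<le> j then l^k * DA k $$ (i - r, j - r) else 0)" .
  qed
  also have "\<dots> = four_block_mat (0\<^sub>m r r) (0\<^sub>m r n) (0\<^sub>m n r) (mpoly DA d l) $$ (i,j)"
  proof -
    have mc: "mpoly DA d l \<in> carrier_mat n n" by (rule mpoly_carrier[OF DA])
    show ?thesis
    proof (cases "r \<le> i \<and> r \<le> j")
      case True
      then have "mpoly DA d l $$ (i - r, j - r) = (\<Sum>k<d+1. l^k * DA k $$ (i - r, j - r))"
        using i j by (intro mpoly_index[OF DA]) auto
      then show ?thesis using True i j mc by simp
    next
      case False
      then show ?thesis using i j mc by auto
    qed
  qed
  finally show ?case by simp
qed (auto simp: J2_closed powrow_closed carrier_matD[OF mpoly_carrier[OF DA]])

lemma sum_split_add: "(\<Sum>i<a+b. f i) = (\<Sum>i<a. f i) + (\<Sum>i<b. f (a + i))" for f :: "nat \<Rightarrow> real"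
proof -
  have "{..<a+b} = {..<a} \<union> {a..<a+b}" by auto
  moreover have "sum f ({..<a} \<union> {a..<a+b}) = sum f {..<a} + sum f {a..<a+b}" by (rule sum.union_disjoint) auto
  ultimately have "(\<Sum>i<a+b. f i) = (\<Sum>i<a. f i) + sum f {a..<a+b}" by simp
  also have "sum f {a..<a+b} = (\<Sum>i<b. f (a + i))"
    by (simp add: sum.atLeastLessThan_shift_0[of f] atLeast0LessThan o_def)
  finally show ?thesis .
qed

lemma vnorm_append_sq: "(vnorm (x @\<^sub>v y))\<^sup>2 = (vnorm x)\<^sup>2 + (vnorm y)\<^sup>2"
proof -
  have "(vnorm (x @\<^sub>v y))\<^sup>2 = (\<Sum>i<dim_vec x + dim_vec y. (cmod ((x @\<^sub>v y) $ i))\<^sup>2)"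
    unfolding vnorm_sq by simp
  also have "\<dots> = (\<Sum>i<dim_vec x. (cmod ((x @\<^sub>v y) $ i))\<^sup>2) + (\<Sum>i<dim_vec y. (cmod ((x @\<^sub>v y) $ (dim_vec x + i)))\<^sup>2)"
    by (rule sum_split_add)
  also have "(\<Sum>i<dim_vec x. (cmod ((x @\<^sub>v y) $ i))\<^sup>2) = (vnorm x)\<^sup>2"
    unfolding vnorm_sq by (intro sum.cong refl) simp
  also have "(\<Sum>i<dim_vec y. (cmod ((x @\<^sub>v y) $ (dim_vec x + i)))\<^sup>2) = (vnorm y)\<^sup>2"
    unfolding vnorm_sq by (intro sum.cong refl) simp
  finally show ?thesis .
qed

lemma vnorm_zero_vec: "vnorm (0\<^sub>v b) = 0" by (simp add: vnorm_def)

lemma vnorm_app0: "vnorm (x @\<^sub>v 0\<^sub>v b) = vnorm x" "vnorm (0\<^sub>v b @\<^sub>v x) = vnorm x"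
proof -
  have "(vnorm (x @\<^sub>v 0\<^sub>v b))\<^sup>2 = (vnorm x)\<^sup>2" by (simp add: vnorm_append_sq vnorm_zero_vec)
  then show "vnorm (x @\<^sub>v 0\<^sub>v b) = vnorm x" using vnorm_nonneg by (rule power2_eq_imp_eq) (rule vnorm_nonneg)
  have "(vnorm (0\<^sub>v b @\<^sub>v x))\<^sup>2 = (vnorm x)\<^sup>2" by (simp add: vnorm_append_sq vnorm_zero_vec)
  then show "vnorm (0\<^sub>v b @\<^sub>v x) = vnorm x" using vnorm_nonneg by (rule power2_eq_imp_eq) (rule vnorm_nonneg)
qed

lemma spec_blk:
  assumes A: "A \<in> carrier_mat a a" and B: "B \<in> carrier_mat b b"
  shows "spec_norm (four_block_mat A (0\<^sub>m a b) (0\<^sub>m b a) B) = max (spec_norm A) (spec_norm B)"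
proof -
  let ?M = "four_block_mat A (0\<^sub>m a b) (0\<^sub>m b a) B"
  have M: "?M \<in> carrier_mat (a+b) (a+b)" using A B by auto
  have sA: "spec_norm A \<ge> 0" by (rule spec_norm_props(3)[OF A])
  have sB: "spec_norm B \<ge> 0" by (rule spec_norm_props(3)[OF B])
  have le: "spec_norm ?M \<le> max (spec_norm A) (spec_norm B)"
  proof (rule spec_norm_le[OF M])
    show "0 \<le> max (spec_norm A) (spec_norm B)" using sA by simp
    fix w :: "complex vec" assume w: "w \<in> carrier_vec (a+b)"
    let ?c = "max (spec_norm A) (spec_norm B)"
    define x where "x = vec_first w a"
    define y where "y = vec_last w b"
    have x: "x \<in> carrier_vec a" and y: "y \<in> carrier_vec b" unfolding x_def y_def by auto
    have wxy: "w = x @\<^sub>v y" unfolding x_def y_def using w by simp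
    have Mw: "?M *\<^sub>v w = (A *\<^sub>v x) @\<^sub>v (B *\<^sub>v y)" unfolding wxy by (rule mult_mat_vec_split[OF A B x y])
    have "(vnorm (?M *\<^sub>v w))\<^sup>2 = (vnorm (A *\<^sub>v x))\<^sup>2 + (vnorm (B *\<^sub>v y))\<^sup>2" unfolding Mw by (rule vnorm_append_sq)
    also have "\<dots> \<le> (spec_norm A * vnorm x)\<^sup>2 + (spec_norm B * vnorm y)\<^sup>2"
      using spec_norm_props(2)[OF A x] spec_norm_props(2)[OF B y] vnorm_nonneg
      by (intro add_mono power_mono) auto
    also have "\<dots> \<le> (?c * vnorm x)\<^sup>2 + (?c * vnorm y)\<^sup>2"
    proof (rule add_mono)
      show "(spec_norm A * vnorm x)\<^sup>2 \<le> (?c * vnorm x)\<^sup>2"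
        by (rule power_mono[OF mult_right_mono]) (use sA vnorm_nonneg[of x] in auto)
      show "(spec_norm B * vnorm y)\<^sup>2 \<le> (?c * vnorm y)\<^sup>2"
        by (rule power_mono[OF mult_right_mono]) (use sB vnorm_nonneg[of y] in auto)
    qed
    also have "\<dots> = ?c\<^sup>2 * ((vnorm x)\<^sup>2 + (vnorm y)\<^sup>2)" by (simp only: power_mult_distrib distrib_left)
    also have "\<dots> = (?c * vnorm w)\<^sup>2"
    proof -
      have e: "(vnorm x)\<^sup>2 + (vnorm y)\<^sup>2 = (vnorm w)\<^sup>2" by (simp only: wxy vnorm_append_sq)
      show ?thesis by (simp only: e power_mult_distrib)
    qed
    finally have sq: "(vnorm (?M *\<^sub>v w))\<^sup>2 \<le> (?c * vnorm w)\<^sup>2" .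
    have "0 \<le> ?c * vnorm w" using sA vnorm_nonneg[of w] by simp
    then show "vnorm (?M *\<^sub>v w) \<le> ?c * vnorm w" by (rule power2_le_imp_le[OF sq])
  qed
  have geA: "spec_norm A \<le> spec_norm ?M"
  proof (rule spec_norm_le[OF A spec_norm_props(3)[OF M]])
    fix x :: "complex vec" assume x: "x \<in> carrier_vec a"
    have z: "0\<^sub>v b \<in> carrier_vec b" by simp
    have "?M *\<^sub>v (x @\<^sub>v 0\<^sub>v b) = (A *\<^sub>v x) @\<^sub>v (B *\<^sub>v 0\<^sub>v b)" by (rule mult_mat_vec_split[OF A B x z])
    also have "B *\<^sub>v 0\<^sub>v b = 0\<^sub>v b" using B by simp
    finally have "vnorm (?M *\<^sub>v (x @\<^sub>v 0\<^sub>v b)) = vnorm (A *\<^sub>v x)" by (simp add: vnorm_app0)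
    moreover have "vnorm (x @\<^sub>v 0\<^sub>v b) = vnorm x" by (rule vnorm_app0)
    moreover have "x @\<^sub>v 0\<^sub>v b \<in> carrier_vec (a+b)" using x by simp
    ultimately show "vnorm (A *\<^sub>v x) \<le> spec_norm ?M * vnorm x"
      using spec_norm_props(2)[OF M, of "x @\<^sub>v 0\<^sub>v b"] by simp
  qed
  have geB: "spec_norm B \<le> spec_norm ?M"
  proof (rule spec_norm_le[OF B spec_norm_props(3)[OF M]])
    fix y :: "complex vec" assume y: "y \<in> carrier_vec b"
    have z: "0\<^sub>v a \<in> carrier_vec a" by simp
    have "?M *\<^sub>v (0\<^sub>v a @\<^sub>v y) = (A *\<^sub>v 0\<^sub>v a) @\<^sub>v (B *\<^sub>v y)" by (rule mult_mat_vec_split[OF A B z y])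
    also have "A *\<^sub>v 0\<^sub>v a = 0\<^sub>v a" using A by simp
    finally have "vnorm (?M *\<^sub>v (0\<^sub>v a @\<^sub>v y)) = vnorm (B *\<^sub>v y)" by (simp add: vnorm_app0)
    moreover have "vnorm (0\<^sub>v a @\<^sub>v y) = vnorm y" by (rule vnorm_app0)
    moreover have "0\<^sub>v a @\<^sub>v y \<in> carrier_vec (a+b)" using y by simp
    ultimately show "vnorm (B *\<^sub>v y) \<le> spec_norm ?M * vnorm y"
      using spec_norm_props(2)[OF M, of "0\<^sub>v a @\<^sub>v y"] by simp
  qed
  show ?thesis using le geA geB by simp
qed

lemma spec_zero_dim: "spec_norm (0\<^sub>m 0 0) = 0"
proof -
  obtain v where v: "v\<in>carrier_vec 0" "vnorm (0\<^sub>m 0 0 *\<^sub>v v) = spec_norm (0\<^sub>m 0 0)"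
    using spec_norm_props(1)[of "0\<^sub>m 0 0" 0 0] by auto
  then show ?thesis by (simp add: vnorm_def)
qed

lemma spec_diag:
  "\<forall>D\<in>set Ds. D \<in> carrier_mat n n \<Longrightarrow> spec_norm (diag_block_mat Ds) = foldr max (map spec_norm Ds) 0"
proof (induction Ds)
  case Nil then show ?case by (simp add: spec_zero_dim)
next
  case (Cons D Ds)
  have D: "D \<in> carrier_mat n n" using Cons.prems by simp
  have Bd: "diag_block_mat Ds \<in> carrier_mat (length Ds * n) (length Ds * n)"
    using diag_block_closed[of Ds n n] Cons.prems by simp
  have "diag_block_mat (D # Ds) = four_block_mat D (0\<^sub>m n (length Ds * n)) (0\<^sub>m (length Ds * n) n) (diag_block_mat Ds)"
    using D Bd by (simp add: Let_def)
  then show ?case using spec_blk[OF D Bd] Cons by simp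
qed

lemma foldr_max_Max:
  assumes "\<And>x. f x \<ge> (0::real)"
  shows "foldr max (map f xs) 0 = Max (insert 0 (f ` set xs))"
proof (induction xs)
  case Nil then show ?case by simp
next
  case (Cons x xs)
  have "Max (insert 0 (f ` set (x # xs))) = Max (insert (f x) (insert 0 (f ` set xs)))"
    by (simp add: insert_commute)
  also have "\<dots> = max (f x) (Max (insert 0 (f ` set xs)))" by (rule Max_insert) auto
  finally show ?case using Cons by simp
qed

lemma Max_spec_eq:
  "foldr max (map spec_norm (map DA [0..<d+1])) 0 = Max ((\<lambda>j. spec_norm (DA j)) ` {0..d})"
proof -
  have nn: "\<And>D. spec_norm D \<ge> 0"
  proof -
    fix D :: "complex mat"
    show "spec_norm D \<ge> 0" using spec_norm_props(3)[of D "dim_row D" "dim_col D"] by auto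
  qed
  have "foldr max (map spec_norm (map DA [0..<d+1])) 0 = Max (insert 0 (spec_norm ` set (map DA [0..<d+1])))"
    using foldr_max_Max[of spec_norm, OF nn] by blast
  also have "spec_norm ` set (map DA [0..<d+1]) = (\<lambda>j. spec_norm (DA j)) ` {0..d}"
    by (auto simp del: upt_Suc simp: atLeastLessThanSuc_atLeastAtMost image_image)
  also have "Max (insert 0 ((\<lambda>j. spec_norm (DA j)) ` {0..d})) = max 0 (Max ((\<lambda>j. spec_norm (DA j)) ` {0..d}))"
    by (rule Max_insert) auto
  also have "\<dots> = Max ((\<lambda>j. spec_norm (DA j)) ` {0..d})"
  proof -
    have "spec_norm (DA 0) \<le> Max ((\<lambda>j. spec_norm (DA j)) ` {0..d})" by (rule Max_ge) auto
    then have "0 \<le> Max ((\<lambda>j. spec_norm (DA j)) ` {0..d})" using nn[of "DA 0"] by linarith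
    then show ?thesis by (rule max_absorb2)
  qed
  finally show ?thesis .
qed

lemma part_iii:
  fixes S Sinv :: "complex mat"
  assumes S: "S \<in> carrier_mat (r+n) (r+n)" and Si: "Sinv \<in> carrier_mat (r + n) (r + n)"
    and SSi: "S * Sinv = 1\<^sub>m (r + n)" and SiS: "Sinv * S = 1\<^sub>m (r + n)"
  shows "Inf {ereal (Max ((\<lambda>j. spec_norm (DA j)) ` {0..d})) | DA.
     (\<forall>j\<le>d. DA j \<in> carrier_mat n n) \<and>
     det (S - four_block_mat (0\<^sub>m r r) (0\<^sub>m r n) (0\<^sub>m n r) (mpoly DA d l)) = 0} =
     inverse (mu_S (blockdiag_set n d) (J2 r n d * Sinv * powrow (r + n) d l * J1 r n d))"
proof -
  define U where "U = powrow (r+n) d l * J1 r n d"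
  define V where "V = J2 r n d"
  have U: "U \<in> carrier_mat (r+n) ((d+1)*n)" unfolding U_def PJ_closed by simp
  have V: "V \<in> carrier_mat ((d+1)*n) (r+n)" unfolding V_def J2_closed by simp
  have P: "powrow (r+n) d l \<in> carrier_mat (r+n) ((d+1)*(r+n))" unfolding powrow_closed by simp
  have J1c: "J1 r n d \<in> carrier_mat ((d+1)*(r+n)) ((d+1)*n)" unfolding J1_closed by simp
  define M where "M = J2 r n d * Sinv * powrow (r + n) d l * J1 r n d"
  have MVU: "M = V * Sinv * U"
  proof -
    have VS: "V * Sinv \<in> carrier_mat ((d+1)*n) (r+n)" using V Si by simp
    show ?thesis unfolding M_def U_def V_def[symmetric] by (rule assoc_mult_mat[OF VS P J1c])
  qed
  have dM: "dim_col M = (d+1)*n" unfolding M_def using J1c by simp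
  define T where "T = {D \<in> blockdiag_set n d. det (1\<^sub>m (dim_col M) - D * M) = 0}"
  have key: "(\<forall>j\<le>d. DA j \<in> carrier_mat n n) \<Longrightarrow>
     det (S - four_block_mat (0\<^sub>m r r) (0\<^sub>m r n) (0\<^sub>m n r) (mpoly DA d l)) = 0 \<longleftrightarrow>
     det (1\<^sub>m (dim_col M) - diag_block_mat (map DA [0..<d+1]) * M) = 0" for DA
  proof -
    assume DA: "\<forall>j\<le>d. DA j \<in> carrier_mat n n"
    have Dc: "diag_block_mat (map DA [0..<d+1]) \<in> carrier_mat ((d+1)*n) ((d+1)*n)"
      by (rule Dblk_carrier(1)[OF DA])
    show ?thesis unfolding dM unfolding blockP_eq[OF DA] U_def[symmetric] V_def[symmetric] MVU
      by (rule det_pert[OF S Si SSi SiS U Dc V])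
  qed
  have spec_DA: "(\<forall>j\<le>d. DA j \<in> carrier_mat n n) \<Longrightarrow>
     spec_norm (diag_block_mat (map DA [0..<d+1])) = Max ((\<lambda>j. spec_norm (DA j)) ` {0..d})" for DA
  proof -
    assume DA: "\<forall>j\<le>d. DA j \<in> carrier_mat n n"
    have "spec_norm (diag_block_mat (map DA [0..<d+1])) = foldr max (map spec_norm (map DA [0..<d+1])) 0"
      by (rule spec_diag[of _ n]) (use DA in \<open>auto simp del: upt_Suc\<close>)
    also have "\<dots> = Max ((\<lambda>j. spec_norm (DA j)) ` {0..d})" by (rule Max_spec_eq)
    finally show ?thesis .
  qed
  have sets: "{ereal (Max ((\<lambda>j. spec_norm (DA j)) ` {0..d})) | DA.
     (\<forall>j\<le>d. DA j \<in> carrier_mat n n) \<and>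
     det (S - four_block_mat (0\<^sub>m r r) (0\<^sub>m r n) (0\<^sub>m n r) (mpoly DA d l)) = 0} =
     (\<lambda>D. ereal (spec_norm D)) ` T" (is "?L = ?R")
  proof
    show "?L \<subseteq> ?R"
    proof
      fix a assume "a \<in> ?L"
      then obtain DA where DA: "\<forall>j\<le>d. DA j \<in> carrier_mat n n"
        and dt: "det (S - four_block_mat (0\<^sub>m r r) (0\<^sub>m r n) (0\<^sub>m n r) (mpoly DA d l)) = 0"
        and a: "a = ereal (Max ((\<lambda>j. spec_norm (DA j)) ` {0..d}))" by blast
      have inS: "diag_block_mat (map DA [0..<d+1]) \<in> blockdiag_set n d"
        unfolding blockdiag_set_def
      proof (intro CollectI exI conjI)
        show "length (map DA [0..<d+1]) = d + 1" by simp
        show "\<forall>D\<in>set (map DA [0..<d+1]). D \<in> carrier_mat n n" using DA by (auto simp del: upt_Suc)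
      qed (rule refl)
      have "diag_block_mat (map DA [0..<d+1]) \<in> T" unfolding T_def using inS key[OF DA] dt by simp
      moreover have "a = ereal (spec_norm (diag_block_mat (map DA [0..<d+1])))" using a spec_DA[OF DA] by simp
      ultimately show "a \<in> ?R" by blast
    qed
    show "?R \<subseteq> ?L"
    proof
      fix a assume "a \<in> ?R"
      then obtain D where D: "D \<in> T" and a: "a = ereal (spec_norm D)" by blast
      then obtain Ds where Ds: "D = diag_block_mat Ds" "length Ds = d + 1" "\<forall>X\<in>set Ds. X \<in> carrier_mat n n"
        unfolding T_def blockdiag_set_def by blast
      define DA where "DA j = Ds ! j" for j
      have "map DA [0..<d+1] = map ((!) Ds) [0..<length Ds]" unfolding DA_def using Ds(2) by (simp del: upt_Suc)
      then have mp: "map DA [0..<d+1] = Ds" by (simp only: map_nth)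
      have DA: "\<forall>j\<le>d. DA j \<in> carrier_mat n n" unfolding DA_def using Ds(2,3) by auto
      have "det (1\<^sub>m (dim_col M) - diag_block_mat (map DA [0..<d+1]) * M) = 0"
        using D unfolding T_def mp Ds(1) by simp
      then have "det (S - four_block_mat (0\<^sub>m r r) (0\<^sub>m r n) (0\<^sub>m n r) (mpoly DA d l)) = 0" using key[OF DA] by simp
      moreover have "a = ereal (Max ((\<lambda>j. spec_norm (DA j)) ` {0..d}))" using a spec_DA[OF DA] mp Ds(1) by simp
      ultimately show "a \<in> ?L" using DA by blast
    qed
  qed
  show ?thesis
  proof (cases "T = {}")
    case True
    then show ?thesis unfolding sets M_def[symmetric] mu_S_def T_def[symmetric] Let_def by (simp add: top_ereal_def)
  next
    case False
    have "Inf ((\<lambda>D. ereal (spec_norm D)) ` T) \<ge> 0"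
    proof (rule Inf_greatest)
      fix x assume "x \<in> (\<lambda>D. ereal (spec_norm D)) ` T"
      then obtain D where "x = ereal (spec_norm D)" by blast
      then show "0 \<le> x" using spec_norm_props(3)[of D "dim_row D" "dim_col D"] by auto
    qed
    then have "Inf ((\<lambda>D. ereal (spec_norm D)) ` T) \<noteq> - \<infinity>" by auto
    then show ?thesis using False unfolding sets M_def[symmetric] mu_S_def T_def[symmetric] Let_def
      by (simp add: ereal_inv_inv)
  qed
qed

theorem theorem2p3:
  fixes r n d :: nat and A B C Sinv :: "complex mat" and As :: "nat \<Rightarrow> complex mat" and l :: complex
  assumes "A \<in> carrier_mat r r" and "B \<in> carrier_mat r n" and "C \<in> carrier_mat n r"
    and "\<forall>k\<le>d. As k \<in> carrier_mat n n"
    and "invertible_mat (rosen r A B C As d l)"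
    and "Sinv \<in> carrier_mat (r + n) (r + n)"
    and "rosen r A B C As d l * Sinv = 1\<^sub>m (r + n)"
    and "Sinv * rosen r A B C As d l = 1\<^sub>m (r + n)"
  shows "(eta_B r n A B C As d l < \<infinity> \<longrightarrow>
           eta_B r n A B C As d l =
             inverse (ereal (sigma_max (hcat (0\<^sub>m n r) (1\<^sub>m n) * Sinv *
                                         transpose_mat (hcat (1\<^sub>m r) (0\<^sub>m r n))))))
       \<and> (eta_C r n A B C As d l < \<infinity> \<longrightarrow>
           eta_C r n A B C As d l =
             inverse (ereal (sigma_max (hcat (1\<^sub>m r) (0\<^sub>m r n) * Sinv *
                                         transpose_mat (hcat (0\<^sub>m n r) (1\<^sub>m n))))))
       \<and> (eta_P r n A B C As d l < \<infinity> \<longrightarrow>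
           eta_P r n A B C As d l =
             inverse (mu_S (blockdiag_set n d)
                        (J2 r n d * Sinv * powrow (r + n) d l * J1 r n d)))"
proof -
  have S: "rosen r A B C As d l \<in> carrier_mat (r+n) (r+n)"
    by (rule rosen_carrier) (use assms in auto)
  show ?thesis
    unfolding eta_B_def eta_C_def eta_P_def
    using part_i[OF S assms(6,7,8)] part_ii[OF S assms(6,7,8)] part_iii[OF S assms(6,7,8)]
    by blast
qed


end
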